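(* Let $V$ be a Banach $\mathbb O$-bimodule, let $T\in\mathscr B_{\mathcal{RO}}(V)$ be power-associative and let $s\in\mathbb O$ with $|s|>\|T\|$. Then $R_s-T$ is invertible in $\mathscr B_{\mathbb R}(V)$ and $$(R_s-T)^{\circledcirc-}=\sum_{n\ge0}T^n\odot s^{-1-n},\qquad (R_s-T)^{-\circledcirc}=\sum_{n\ge0}s^{-1-n}\odot T^n,$$ the series converging (pointwise in norm) in $\mathscr B_{\mathcal{RO}}(V)$.
   Context: $\mathbb O$ is the real octonion algebra with basis $e_0=1,\dots,e_7$, conjugation $\bar x$, norm $|x|$. An $\mathbb O$-bimodule is a real vector space $M$ with real-bilinear left and right multiplications by $\mathbb O$ (with $1x=x1=x$) whose associators $[p,q,x]=(pq)x-p(qx)$, $[p,x,q]=(px)q-p(xq)$, $[x,p,q]=(xp)q-x(pq)$ satisfy $[p,q,x]=[q,x,p]=[x,p,q]=-[q,p,x]$. Its real part is $\operatorname{Re}M=\{m: pm=mp,\ [p,q,m]=0\ \forall p,q\}$; every $x$ decomposes uniquely as $x=\sum_{i=0}^7e_ix_i$ with $x_i\in\operatorname{Re}M$ and $\operatorname{Re}x:=x_0$. A Banach $\mathbb O$-bimodule is one with a complete norm with $\|px\|=\|xp\|=|p|\|x\|$. $\mathscr B_{\mathbb R}(V)$: bounded real-linear operators, ordinary composition and powers; $T$ is invertible if it has an inverse in $\mathscr B_{\mathbb R}(V)$. $R_sv=vs$. For real-linear $f$, $B_p(f,x)=f(x)p-f(xp)$; $f$ is right para-linear if $\operatorname{Re}B_p(f,x)=0$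 for all $p,x$; $\mathscr B_{\mathcal{RO}}(V)$ denotes bounded right para-linear operators, an $\mathbb O$-bimodule via $(p\odot f)(x)=pf(x)+B_p(f,x)$, $(f\odot p)(x)=f(px)-B_p(f,x)$. $T\in\mathscr B_{\mathcal{RO}}(V)$ is power-associative if $T^n\in\mathscr B_{\mathcal{RO}}(V)$ for all $n\in\mathbb N$. For real-linear $h:\operatorname{Re}V\to V$, $(\operatorname{ext}h)(\sum_ix_ie_i)=\sum_ih(x_i)e_i$ ($x_i\in\operatorname{Re}V$); for real-linear $h:V\to\operatorname{Re}V$, $(\operatorname{lif}h)(x)=\sum_{i=0}^7h(x\bar e_i)e_i$. For invertible $S\in\mathscr B_{\mathbb R}(V)$, the right and left regular inverses are $S^{\circledcirc-}=\operatorname{ext}(S^{-1}|_{\operatorname{Re}V})$ and $S^{-\circledcirc}=\operatorname{lif}(\operatorname{Re}\circ S^{-1})$. *)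

theory Defs
  imports "HOL-Analysis.Analysis"
begin

text \<open>Quaternions are pairs of complex numbers, octonions pairs of quaternions, with
  the Cayley--Dickson product (a,b)(c,d) = (ac - conj(d) b, d a + b conj(c)) and
  conjugation conj(a,b) = (conj a, -b).  The underlying real vector space is the
  product space, whose (product) norm is exactly the Euclidean octonion norm.\<close>

type_synonym quat = "complex \<times> complex"
type_synonym oct = "quat \<times> quat"

definition qmult :: "quat \<Rightarrow> quat \<Rightarrow> quat" where
  "qmult x y = (fst x * fst y - cnj (snd y) * snd x, snd y * fst x + snd x * cnj (fst y))"

definition qcnj :: "quat \<Rightarrow> quat" where
  "qcnj x = (cnj (fst x), - snd x)"

definition omult :: "oct \<Rightarrow> oct \<Rightarrow> oct" where
  "omult x y = (qmult (fst x) (fst y) - qmult (qcnj (snd y)) (snd x),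
                qmult (snd y) (fst x) + qmult (snd x) (qcnj (fst y)))"

definition ocnj :: "oct \<Rightarrow> oct" where
  "ocnj x = (qcnj (fst x), - snd x)"

definition oone :: oct where
  "oone = ((1, 0), (0, 0))"

definition obasis :: "nat \<Rightarrow> oct" where
  "obasis i = (if i = 0 then ((1,0),(0,0))
          else if i = 1 then ((\<i>,0),(0,0))
          else if i = 2 then ((0,1),(0,0))
          else if i = 3 then ((0,\<i>),(0,0))
          else if i = 4 then ((0,0),(1,0))
          else if i = 5 then ((0,0),(\<i>,0))
          else if i = 6 then ((0,0),(0,1))
          else if i = 7 then ((0,0),(0,\<i>))
          else 0)"

definition oinv :: "oct \<Rightarrow> oct" where
  "oinv s = (1 / (norm s)\<^sup>2) *\<^sub>R ocnj s"

primrec opow :: "oct \<Rightarrow> nat \<Rightarrow> oct" where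
  "opow s 0 = oone"
| "opow s (Suc n) = omult s (opow s n)"

text \<open>lm p x = p x (left multiplication), rm x p = x p (right multiplication).\<close>

definition assocL :: "(oct \<Rightarrow> 'v::real_vector \<Rightarrow> 'v) \<Rightarrow> oct \<Rightarrow> oct \<Rightarrow> 'v \<Rightarrow> 'v" where
  "assocL lm p q x = lm (omult p q) x - lm p (lm q x)"

definition assocM :: "(oct \<Rightarrow> 'v::real_vector \<Rightarrow> 'v) \<Rightarrow> ('v \<Rightarrow> oct \<Rightarrow> 'v) \<Rightarrow> oct \<Rightarrow> 'v \<Rightarrow> oct \<Rightarrow> 'v" where
  "assocM lm rm p x q = rm (lm p x) q - lm p (rm x q)"

definition assocR :: "('v \<Rightarrow> oct \<Rightarrow> 'v::real_vector) \<Rightarrow> 'v \<Rightarrow> oct \<Rightarrow> oct \<Rightarrow> 'v" where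
  "assocR rm x p q = rm (rm x p) q - rm x (omult p q)"

definition O_bimodule :: "(oct \<Rightarrow> 'v::real_vector \<Rightarrow> 'v) \<Rightarrow> ('v \<Rightarrow> oct \<Rightarrow> 'v) \<Rightarrow> bool" where
  "O_bimodule lm rm \<longleftrightarrow>
     (\<forall>x. linear (\<lambda>p. lm p x)) \<and> (\<forall>p. linear (lm p)) \<and>
     (\<forall>x. linear (\<lambda>p. rm x p)) \<and> (\<forall>p. linear (\<lambda>x. rm x p)) \<and>
     (\<forall>x. lm oone x = x \<and> rm x oone = x) \<and>
     (\<forall>p q x. assocL lm p q x = assocM lm rm q x p \<and>
              assocM lm rm q x p = assocR rm x p q \<and>
              assocR rm x p q = - assocL lm q p x)"

definition Banach_O_bimodule :: "(oct \<Rightarrow> 'v::banach \<Rightarrow> 'v) \<Rightarrow> ('v \<Rightarrow> oct \<Rightarrow> 'v) \<Rightarrow> bool" where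
  "Banach_O_bimodule lm rm \<longleftrightarrow> O_bimodule lm rm \<and>
     (\<forall>p x. norm (lm p x) = norm p * norm x \<and> norm (rm x p) = norm p * norm x)"

definition ReM :: "(oct \<Rightarrow> 'v::real_vector \<Rightarrow> 'v) \<Rightarrow> ('v \<Rightarrow> oct \<Rightarrow> 'v) \<Rightarrow> 'v set" where
  "ReM lm rm = {m. (\<forall>p. lm p m = rm m p) \<and> (\<forall>p q. assocL lm p q m = 0)}"

definition odecomp :: "(oct \<Rightarrow> 'v::real_vector \<Rightarrow> 'v) \<Rightarrow> ('v \<Rightarrow> oct \<Rightarrow> 'v) \<Rightarrow> 'v \<Rightarrow> nat \<Rightarrow> 'v" where
  "odecomp lm rm x = (THE xs. (\<forall>i<8. xs i \<in> ReM lm rm) \<and> (\<forall>i\<ge>8. xs i = 0) \<and>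
                         x = (\<Sum>i<8. lm (obasis i) (xs i)))"

definition ReV :: "(oct \<Rightarrow> 'v::real_vector \<Rightarrow> 'v) \<Rightarrow> ('v \<Rightarrow> oct \<Rightarrow> 'v) \<Rightarrow> 'v \<Rightarrow> 'v" where
  "ReV lm rm x = odecomp lm rm x 0"

definition Bp :: "('v \<Rightarrow> oct \<Rightarrow> 'v::real_vector) \<Rightarrow> oct \<Rightarrow> ('v \<Rightarrow> 'v) \<Rightarrow> 'v \<Rightarrow> 'v" where
  "Bp rm p f x = rm (f x) p - f (rm x p)"

definition right_paralinear :: "(oct \<Rightarrow> 'v::real_vector \<Rightarrow> 'v) \<Rightarrow> ('v \<Rightarrow> oct \<Rightarrow> 'v) \<Rightarrow> ('v \<Rightarrow> 'v) \<Rightarrow> bool" where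
  "right_paralinear lm rm f \<longleftrightarrow> linear f \<and> (\<forall>p x. ReV lm rm (Bp rm p f x) = 0)"

definition BRO :: "(oct \<Rightarrow> 'v::real_normed_vector \<Rightarrow> 'v) \<Rightarrow> ('v \<Rightarrow> oct \<Rightarrow> 'v) \<Rightarrow> ('v \<Rightarrow> 'v) set" where
  "BRO lm rm = {f. bounded_linear f \<and> right_paralinear lm rm f}"

definition lsmult :: "(oct \<Rightarrow> 'v::real_vector \<Rightarrow> 'v) \<Rightarrow> ('v \<Rightarrow> oct \<Rightarrow> 'v) \<Rightarrow> oct \<Rightarrow> ('v \<Rightarrow> 'v) \<Rightarrow> 'v \<Rightarrow> 'v" where
  "lsmult lm rm p f x = lm p (f x) + Bp rm p f x"

definition rsmult :: "(oct \<Rightarrow> 'v::real_vector \<Rightarrow> 'v) \<Rightarrow> ('v \<Rightarrow> oct \<Rightarrow> 'v) \<Rightarrow> ('v \<Rightarrow> 'v) \<Rightarrow> oct \<Rightarrow> 'v \<Rightarrow> 'v" where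
  "rsmult lm rm f p x = f (lm p x) - Bp rm p f x"

definition power_associative :: "(oct \<Rightarrow> 'v::real_normed_vector \<Rightarrow> 'v) \<Rightarrow> ('v \<Rightarrow> oct \<Rightarrow> 'v) \<Rightarrow> ('v \<Rightarrow> 'v) \<Rightarrow> bool" where
  "power_associative lm rm T \<longleftrightarrow> T \<in> BRO lm rm \<and> (\<forall>n. T ^^ n \<in> BRO lm rm)"

definition invertible_op :: "('v::real_normed_vector \<Rightarrow> 'v) \<Rightarrow> bool" where
  "invertible_op S \<longleftrightarrow> bounded_linear S \<and>
     (\<exists>g. bounded_linear g \<and> g \<circ> S = id \<and> S \<circ> g = id)"

definition oext :: "(oct \<Rightarrow> 'v::real_vector \<Rightarrow> 'v) \<Rightarrow> ('v \<Rightarrow> oct \<Rightarrow> 'v) \<Rightarrow> ('v \<Rightarrow> 'v) \<Rightarrow> 'v \<Rightarrow> 'v" where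
  "oext lm rm h x = (\<Sum>i<8. rm (h (odecomp lm rm x i)) (obasis i))"

definition olif :: "(oct \<Rightarrow> 'v::real_vector \<Rightarrow> 'v) \<Rightarrow> ('v \<Rightarrow> oct \<Rightarrow> 'v) \<Rightarrow> ('v \<Rightarrow> 'v) \<Rightarrow> 'v \<Rightarrow> 'v" where
  "olif lm rm h x = (\<Sum>i<8. rm (h (rm x (ocnj (obasis i)))) (obasis i))"

definition right_reg_inv :: "(oct \<Rightarrow> 'v::real_vector \<Rightarrow> 'v) \<Rightarrow> ('v \<Rightarrow> oct \<Rightarrow> 'v) \<Rightarrow> ('v \<Rightarrow> 'v) \<Rightarrow> 'v \<Rightarrow> 'v" where
  "right_reg_inv lm rm S = oext lm rm (inv S)"

definition left_reg_inv :: "(oct \<Rightarrow> 'v::real_vector \<Rightarrow> 'v) \<Rightarrow> ('v \<Rightarrow> oct \<Rightarrow> 'v) \<Rightarrow> ('v \<Rightarrow> 'v) \<Rightarrow> 'v \<Rightarrow> 'v" where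
  "left_reg_inv lm rm S = olif lm rm (\<lambda>x. ReV lm rm (inv S x))"

end

theory Submission
  imports Defs
begin

section \<open>Octonion algebra\<close>

declare One_nat_def [simp del]

lemma ob0: "obasis 0 = oone" by (simp add: obasis_def oone_def)

definition omk :: "real \<Rightarrow> real \<Rightarrow> real \<Rightarrow> real \<Rightarrow> real \<Rightarrow> real \<Rightarrow> real \<Rightarrow> real \<Rightarrow> oct" where
 "omk a0 a1 a2 a3 a4 a5 a6 a7 = ((Complex a0 a1, Complex a2 a3), (Complex a4 a5, Complex a6 a7))"

lemma omk_cases: obtains a0 a1 a2 a3 a4 a5 a6 a7 where "x = omk a0 a1 a2 a3 a4 a5 a6 a7"
  by (metis omk_def complex.exhaust_sel prod.collapse)

lemma omult_omk: "omult (omk a0 a1 a2 a3 a4 a5 a6 a7) (omk b0 b1 b2 b3 b4 b5 b6 b7) =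
  omk (a0 * b0 - a1 * b1 - a2 * b2 - a3 * b3 - a4 * b4 - a5 * b5 - a6 * b6 - a7 * b7)
      (a0 * b1 + a1 * b0 + a2 * b3 - a3 * b2 + a4 * b5 - a5 * b4 - a6 * b7 + a7 * b6)
      (a0 * b2 - a1 * b3 + a2 * b0 + a3 * b1 + a4 * b6 + a5 * b7 - a6 * b4 - a7 * b5)
      (a0 * b3 + a1 * b2 - a2 * b1 + a3 * b0 + a4 * b7 - a5 * b6 + a6 * b5 - a7 * b4)
      (a0 * b4 - a1 * b5 - a2 * b6 - a3 * b7 + a4 * b0 + a5 * b1 + a6 * b2 + a7 * b3)
      (a0 * b5 + a1 * b4 - a2 * b7 + a3 * b6 - a4 * b1 + a5 * b0 - a6 * b3 + a7 * b2)
      (a0 * b6 + a1 * b7 + a2 * b4 - a3 * b5 - a4 * b2 + a5 * b3 + a6 * b0 - a7 * b1)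
      (a0 * b7 - a1 * b6 + a2 * b5 + a3 * b4 - a4 * b3 - a5 * b2 + a6 * b1 + a7 * b0)"
  by (simp add: omk_def omult_def qmult_def qcnj_def Complex_eq algebra_simps)

lemma norm_omk: "norm (omk a0 a1 a2 a3 a4 a5 a6 a7) = sqrt (a0\<^sup>2 + a1\<^sup>2 + a2\<^sup>2 + a3\<^sup>2 + a4\<^sup>2 + a5\<^sup>2 + a6\<^sup>2 + a7\<^sup>2)"
  by (simp add: omk_def norm_Pair cmod_def add.assoc)

lemma omult_norm: "norm (omult x y) = norm x * norm y"
proof -
  obtain a0 a1 a2 a3 a4 a5 a6 a7 where x: "x = omk a0 a1 a2 a3 a4 a5 a6 a7" by (rule omk_cases)
  obtain b0 b1 b2 b3 b4 b5 b6 b7 where y: "y = omk b0 b1 b2 b3 b4 b5 b6 b7" by (rule omk_cases)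
  show ?thesis unfolding x y omult_omk norm_omk
    by (simp add: real_sqrt_mult[symmetric]) (simp add: algebra_simps power2_eq_square)
qed

lemma omk_add: "omk a0 a1 a2 a3 a4 a5 a6 a7 + omk b0 b1 b2 b3 b4 b5 b6 b7 = omk (a0+b0) (a1+b1) (a2+b2) (a3+b3) (a4+b4) (a5+b5) (a6+b6) (a7+b7)"
  by (simp add: omk_def complex_eq_iff)
lemma omk_scale: "c *\<^sub>R omk a0 a1 a2 a3 a4 a5 a6 a7 = omk (c*a0) (c*a1) (c*a2) (c*a3) (c*a4) (c*a5) (c*a6) (c*a7)"
  by (simp add: omk_def Complex_eq scaleR_conv_of_real algebra_simps)
lemma omk_minus: "- omk a0 a1 a2 a3 a4 a5 a6 a7 = omk (-a0) (-a1) (-a2) (-a3) (-a4) (-a5) (-a6) (-a7)"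
  by (simp add: omk_def complex_eq_iff)
lemma omk_diff: "omk a0 a1 a2 a3 a4 a5 a6 a7 - omk b0 b1 b2 b3 b4 b5 b6 b7 = omk (a0-b0) (a1-b1) (a2-b2) (a3-b3) (a4-b4) (a5-b5) (a6-b6) (a7-b7)"
  by (simp add: omk_def complex_eq_iff)
lemma omk_eq: "omk a0 a1 a2 a3 a4 a5 a6 a7 = omk b0 b1 b2 b3 b4 b5 b6 b7 \<longleftrightarrow>
   a0 = b0 \<and> a1 = b1 \<and> a2 = b2 \<and> a3 = b3 \<and> a4 = b4 \<and> a5 = b5 \<and> a6 = b6 \<and> a7 = b7"
  by (simp add: omk_def)
lemma oone_omk: "oone = omk 1 0 0 0 0 0 0 0" by (simp add: oone_def omk_def one_complex.code zero_complex.code)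
lemma ozero_omk: "0 = omk 0 0 0 0 0 0 0 0" by (simp add: omk_def zero_complex.code zero_prod_def)
lemma ocnj_omk: "ocnj (omk a0 a1 a2 a3 a4 a5 a6 a7) = omk a0 (-a1) (-a2) (-a3) (-a4) (-a5) (-a6) (-a7)"
  by (simp add: omk_def ocnj_def qcnj_def Complex_eq)

lemmas omk_simps = omult_omk omk_add omk_scale omk_minus omk_diff omk_eq

lemma omult_add_left: "omult (x + y) z = omult x z + omult y z"
  by (simp add: omult_def qmult_def qcnj_def algebra_simps)
lemma omult_add_right: "omult x (y + z) = omult x y + omult x z"
  by (simp add: omult_def qmult_def qcnj_def algebra_simps)
lemma omult_scaleR_left: "omult (r *\<^sub>R x) z = r *\<^sub>R omult x z"
  by (simp add: omult_def qmult_def qcnj_def algebra_simps scaleR_conv_of_real)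
lemma omult_scaleR_right: "omult x (r *\<^sub>R z) = r *\<^sub>R omult x z"
  by (simp add: omult_def qmult_def qcnj_def algebra_simps scaleR_conv_of_real)
lemma omult_diff_left: "omult (x - y) z = omult x z - omult y z"
  by (simp add: omult_def qmult_def qcnj_def algebra_simps)
lemma omult_diff_right: "omult x (y - z) = omult x y - omult x z"
  by (simp add: omult_def qmult_def qcnj_def algebra_simps)
lemma omult_oone_left: "omult oone x = x"
  by (rule omk_cases[of x]) (simp add: oone_omk omk_simps)
lemma omult_oone_right: "omult x oone = x"
  by (rule omk_cases[of x]) (simp add: oone_omk omk_simps)
lemma omult_zero_left: "omult 0 x = 0"
  by (rule omk_cases[of x]) (simp add: ozero_omk omk_simps)
lemma omult_zero_right: "omult x 0 = 0"
  by (rule omk_cases[of x]) (simp add: ozero_omk omk_simps)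

definition ore :: "oct \<Rightarrow> real" where "ore x = Re (fst (fst x))"
lemma ore_omk: "ore (omk a0 a1 a2 a3 a4 a5 a6 a7) = a0" by (simp add: ore_def omk_def)

lemma ore_omult_omk: "ore (omult (omk a0 a1 a2 a3 a4 a5 a6 a7) (omk b0 b1 b2 b3 b4 b5 b6 b7)) =
   a0 * b0 - a1 * b1 - a2 * b2 - a3 * b3 - a4 * b4 - a5 * b5 - a6 * b6 - a7 * b7"
  by (simp only: omult_omk ore_omk)

lemma ore_assoc: "ore (omult (omult a p) q) = ore (omult a (omult p q))"
proof -
  obtain a0 a1 a2 a3 a4 a5 a6 a7 where x: "a = omk a0 a1 a2 a3 a4 a5 a6 a7" by (rule omk_cases)
  obtain b0 b1 b2 b3 b4 b5 b6 b7 where y: "p = omk b0 b1 b2 b3 b4 b5 b6 b7" by (rule omk_cases)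
  obtain c0 c1 c2 c3 c4 c5 c6 c7 where z: "q = omk c0 c1 c2 c3 c4 c5 c6 c7" by (rule omk_cases)
  show ?thesis unfolding x y z
    apply (subst (2) omult_omk)
    apply (subst (1) omult_omk)
    apply (simp only: ore_omult_omk)
    by (simp add: algebra_simps)
qed

lemma ore_comm: "ore (omult p a) = ore (omult a p)"
proof -
  obtain a0 a1 a2 a3 a4 a5 a6 a7 where x: "a = omk a0 a1 a2 a3 a4 a5 a6 a7" by (rule omk_cases)
  obtain b0 b1 b2 b3 b4 b5 b6 b7 where y: "p = omk b0 b1 b2 b3 b4 b5 b6 b7" by (rule omk_cases)
  show ?thesis unfolding x y omult_omk ore_omk by (simp add: algebra_simps)
qed

lemma ore_add: "ore (x + y) = ore x + ore y" by (simp add: ore_def)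
lemma ore_diff: "ore (x - y) = ore x - ore y" by (simp add: ore_def)

definition oc :: "oct \<Rightarrow> nat \<Rightarrow> real" where
 "oc x i = (if i = 0 then Re (fst (fst x)) else if i = 1 then Im (fst (fst x))
   else if i = 2 then Re (snd (fst x)) else if i = 3 then Im (snd (fst x))
   else if i = 4 then Re (fst (snd x)) else if i = 5 then Im (fst (snd x))
   else if i = 6 then Re (snd (snd x)) else if i = 7 then Im (snd (snd x)) else 0)"

lemma sum8: "(\<Sum>i<(8::nat). f i) = f 0 + f 1 + f 2 + f 3 + f 4 + f 5 + f 6 + (f 7::'a::comm_monoid_add)"
  by (simp add: eval_nat_numeral One_nat_def add.assoc add.commute add.left_commute)

lemma oc_omk: "oc (omk a0 a1 a2 a3 a4 a5 a6 a7) 0 = a0" "oc (omk a0 a1 a2 a3 a4 a5 a6 a7) 1 = a1"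
  "oc (omk a0 a1 a2 a3 a4 a5 a6 a7) 2 = a2" "oc (omk a0 a1 a2 a3 a4 a5 a6 a7) 3 = a3"
  "oc (omk a0 a1 a2 a3 a4 a5 a6 a7) 4 = a4" "oc (omk a0 a1 a2 a3 a4 a5 a6 a7) 5 = a5"
  "oc (omk a0 a1 a2 a3 a4 a5 a6 a7) 6 = a6" "oc (omk a0 a1 a2 a3 a4 a5 a6 a7) 7 = a7"
  by (simp_all add: oc_def omk_def)

lemma obasis_omk: "obasis 0 = omk 1 0 0 0 0 0 0 0" "obasis 1 = omk 0 1 0 0 0 0 0 0" "obasis 2 = omk 0 0 1 0 0 0 0 0"
    "obasis 3 = omk 0 0 0 1 0 0 0 0" "obasis 4 = omk 0 0 0 0 1 0 0 0" "obasis 5 = omk 0 0 0 0 0 1 0 0"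
    "obasis 6 = omk 0 0 0 0 0 0 1 0" "obasis 7 = omk 0 0 0 0 0 0 0 1"
  by (simp_all add: obasis_def omk_def one_complex.code zero_complex.code imaginary_unit.code zero_prod_def)

lemma oexp: "p = (\<Sum>i<8. oc p i *\<^sub>R obasis i)"
proof -
  obtain a0 a1 a2 a3 a4 a5 a6 a7 where x: "p = omk a0 a1 a2 a3 a4 a5 a6 a7" by (rule omk_cases)
  show ?thesis unfolding sum8 obasis_omk x oc_omk omk_scale omk_add by simp
qed

lemma oc0: "oc p 0 = ore p" by (simp add: oc_def ore_def)

lemma ore_cnj_mult: "ore (omult (ocnj a) b) = (\<Sum>i<8. oc a i * oc b i)"
proof -
  obtain a0 a1 a2 a3 a4 a5 a6 a7 where x: "a = omk a0 a1 a2 a3 a4 a5 a6 a7" by (rule omk_cases)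
  obtain b0 b1 b2 b3 b4 b5 b6 b7 where y: "b = omk b0 b1 b2 b3 b4 b5 b6 b7" by (rule omk_cases)
  show ?thesis unfolding x y sum8 ocnj_omk omult_omk ore_omk by (simp add: oc_def omk_def)
qed

lemma oc_basis: assumes "k < 8" shows "oc (obasis k) i = (if i = k then 1 else 0)"
proof -
  have "k = 0 \<or> k = 1 \<or> k = 2 \<or> k = 3 \<or> k = 4 \<or> k = 5 \<or> k = 6 \<or> k = 7" using assms by arith
  then show ?thesis by (elim disjE) (simp_all add: oc_def obasis_def)
qed

lemma ore_cnj_basis: assumes "k < 8" "j < 8" shows "ore (omult (ocnj (obasis k)) (obasis j)) = (if k = j then 1 else 0)"
proof -
  have "ore (omult (ocnj (obasis k)) (obasis j)) = (\<Sum>i<8. oc (obasis k) i * oc (obasis j) i)"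
    by (rule ore_cnj_mult)
  also have "\<dots> = (\<Sum>i<8. (if i = k then (if i = j then 1 else 0) else 0))"
    by (rule sum.cong) (simp_all add: oc_basis assms)
  also have "\<dots> = (if k = j then 1 else 0)" using assms(1) by (simp add: sum.delta)
  finally show ?thesis .
qed

lemma norm_ocnj: "norm (ocnj s) = norm s"
  by (rule omk_cases[of s]) (simp add: ocnj_omk norm_omk)

lemma ocnj_span: "ocnj s = (2 * ore s) *\<^sub>R oone - s"
  by (rule omk_cases[of s]) (simp add: ocnj_omk ore_omk oone_omk omk_simps)

lemma osq: "omult s s = (2 * ore s) *\<^sub>R s - (norm s)\<^sup>2 *\<^sub>R oone"
proof -
  obtain a0 a1 a2 a3 a4 a5 a6 a7 where x: "s = omk a0 a1 a2 a3 a4 a5 a6 a7" by (rule omk_cases)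
  show ?thesis unfolding x by (simp add: omk_simps norm_omk ore_omk oone_omk power2_eq_square algebra_simps)
qed

lemma omult_cnj: "omult s (ocnj s) = (norm s)\<^sup>2 *\<^sub>R oone" "omult (ocnj s) s = (norm s)\<^sup>2 *\<^sub>R oone"
proof -
  obtain a0 a1 a2 a3 a4 a5 a6 a7 where x: "s = omk a0 a1 a2 a3 a4 a5 a6 a7" by (rule omk_cases)
  show "omult s (ocnj s) = (norm s)\<^sup>2 *\<^sub>R oone" "omult (ocnj s) s = (norm s)\<^sup>2 *\<^sub>R oone"
    unfolding x by (simp_all add: omk_simps ocnj_omk norm_omk oone_omk power2_eq_square algebra_simps)
qed

lemma oinv_mult: assumes "s \<noteq> 0" shows "omult s (oinv s) = oone" "omult (oinv s) s = oone"
  using assms by (simp_all add: oinv_def omult_scaleR_left omult_scaleR_right omult_cnj)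

lemma norm_oinv: "norm (oinv s) = 1 / norm s"
  by (simp add: oinv_def norm_ocnj power2_eq_square)

lemma norm_opow: "norm (opow s n) = norm s ^ n"
  by (induct n) (simp_all add: omult_norm oone_def norm_Pair)
definition insp :: "oct \<Rightarrow> oct \<Rightarrow> bool" where "insp s x \<longleftrightarrow> (\<exists>a b. x = a *\<^sub>R oone + b *\<^sub>R s)"

lemma insp_oone: "insp s oone" unfolding insp_def by (rule exI[of _ 1], rule exI[of _ 0]) simp
lemma insp_s: "insp s s" unfolding insp_def by (rule exI[of _ 0], rule exI[of _ 1]) simp
lemma insp_oinv: "insp s (oinv s)" unfolding insp_def oinv_def ocnj_span
  by (rule exI[of _ "2 * ore s / (norm s)\<^sup>2"], rule exI[of _ "- 1 / (norm s)\<^sup>2"]) (simp add: algebra_simps)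

lemma insp_mult: assumes "insp s x" "insp s y" shows "insp s (omult x y)"
proof -
  obtain a b where x: "x = a *\<^sub>R oone + b *\<^sub>R s" using assms(1) insp_def by blast
  obtain c d where y: "y = c *\<^sub>R oone + d *\<^sub>R s" using assms(2) insp_def by blast
  obtain s0 s1 s2 s3 s4 s5 s6 s7 where s: "s = omk s0 s1 s2 s3 s4 s5 s6 s7" by (rule omk_cases)
  show ?thesis unfolding insp_def x y
    apply (rule exI[of _ "a * c - b * d * (norm s)\<^sup>2"], rule exI[of _ "a * d + b * c + 2 * b * d * ore s"])
    unfolding s oone_omk by (simp add: omk_simps norm_omk ore_omk power2_eq_square algebra_simps)
qed

lemma insp_comm: assumes "insp s x" "insp s y" shows "omult x y = omult y x"
proof -
  obtain a b where x: "x = a *\<^sub>R oone + b *\<^sub>R s" using assms(1) insp_def by blast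
  obtain c d where y: "y = c *\<^sub>R oone + d *\<^sub>R s" using assms(2) insp_def by blast
  obtain s0 s1 s2 s3 s4 s5 s6 s7 where s: "s = omk s0 s1 s2 s3 s4 s5 s6 s7" by (rule omk_cases)
  show ?thesis unfolding x y s oone_omk by (simp add: omk_simps algebra_simps)
qed

lemma insp_assoc: assumes "insp s x" "insp s y" "insp s z" shows "omult (omult x y) z = omult x (omult y z)"
proof -
  obtain a b where x: "x = a *\<^sub>R oone + b *\<^sub>R s" using assms(1) insp_def by blast
  obtain c d where y: "y = c *\<^sub>R oone + d *\<^sub>R s" using assms(2) insp_def by blast
  obtain e f where z: "z = e *\<^sub>R oone + f *\<^sub>R s" using assms(3) insp_def by blast
  have sss: "omult (omult s s) s = omult s (omult s s)"
    unfolding osq by (simp add: omult_diff_left omult_diff_right omult_scaleR_left omult_scaleR_right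
        omult_oone_left omult_oone_right)
  show ?thesis unfolding x y z
    by (simp add: omult_add_left omult_add_right omult_scaleR_left omult_scaleR_right
        omult_oone_left omult_oone_right sss algebra_simps)
qed

lemma insp_opow: "insp s t \<Longrightarrow> insp s (opow t n)"
  by (induct n) (simp_all add: insp_oone insp_mult)

lemma opow_oinv_right: assumes "s \<noteq> 0"
  shows "omult (opow (oinv s) (Suc n)) s = opow (oinv s) n"
proof -
  have i: "insp s (oinv s)" "insp s (opow (oinv s) n)" "insp s s" by (simp_all add: insp_oinv insp_opow insp_s)
  have "omult (opow (oinv s) (Suc n)) s = omult (omult (opow (oinv s) n) (oinv s)) s"
    using insp_comm[OF i(1) i(2)] by simp
  also have "\<dots> = omult (opow (oinv s) n) (omult (oinv s) s)" by (rule insp_assoc[OF i(2) i(1) i(3)])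
  also have "\<dots> = opow (oinv s) n" using oinv_mult(2)[OF assms] by (simp add: omult_oone_right)
  finally show ?thesis .
qed

lemma opow_oinv_left: assumes "s \<noteq> 0"
  shows "omult s (opow (oinv s) (Suc n)) = opow (oinv s) n"
proof -
  have i: "insp s (oinv s)" "insp s (opow (oinv s) n)" "insp s s" by (simp_all add: insp_oinv insp_opow insp_s)
  have "omult s (opow (oinv s) (Suc n)) = omult (omult s (oinv s)) (opow (oinv s) n)"
    using insp_assoc[OF i(3) i(1) i(2)] by simp
  also have "\<dots> = opow (oinv s) n" using oinv_mult(1)[OF assms] by (simp add: omult_oone_left)
  finally show ?thesis .
qed

lemma insp_opow_oinv: "insp s (opow (oinv s) n)" by (simp add: insp_opow insp_oinv)

lemma otab_0_0: "omult (obasis 0) (obasis 0) = obasis 0"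
  by (simp add: omult_def qmult_def qcnj_def obasis_def zero_prod_def)
lemma otab_0_1: "omult (obasis 0) (obasis 1) = obasis 1"
  by (simp add: omult_def qmult_def qcnj_def obasis_def zero_prod_def)
lemma otab_0_2: "omult (obasis 0) (obasis 2) = obasis 2"
  by (simp add: omult_def qmult_def qcnj_def obasis_def zero_prod_def)
lemma otab_0_3: "omult (obasis 0) (obasis 3) = obasis 3"
  by (simp add: omult_def qmult_def qcnj_def obasis_def zero_prod_def)
lemma otab_0_4: "omult (obasis 0) (obasis 4) = obasis 4"
  by (simp add: omult_def qmult_def qcnj_def obasis_def zero_prod_def)
lemma otab_0_5: "omult (obasis 0) (obasis 5) = obasis 5"
  by (simp add: omult_def qmult_def qcnj_def obasis_def zero_prod_def)
lemma otab_0_6: "omult (obasis 0) (obasis 6) = obasis 6"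
  by (simp add: omult_def qmult_def qcnj_def obasis_def zero_prod_def)
lemma otab_0_7: "omult (obasis 0) (obasis 7) = obasis 7"
  by (simp add: omult_def qmult_def qcnj_def obasis_def zero_prod_def)
lemma otab_1_0: "omult (obasis 1) (obasis 0) = obasis 1"
  by (simp add: omult_def qmult_def qcnj_def obasis_def zero_prod_def)
lemma otab_1_1: "omult (obasis 1) (obasis 1) = - obasis 0"
  by (simp add: omult_def qmult_def qcnj_def obasis_def zero_prod_def)
lemma otab_1_2: "omult (obasis 1) (obasis 2) = obasis 3"
  by (simp add: omult_def qmult_def qcnj_def obasis_def zero_prod_def)
lemma otab_1_3: "omult (obasis 1) (obasis 3) = - obasis 2"
  by (simp add: omult_def qmult_def qcnj_def obasis_def zero_prod_def)
lemma otab_1_4: "omult (obasis 1) (obasis 4) = obasis 5"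
  by (simp add: omult_def qmult_def qcnj_def obasis_def zero_prod_def)
lemma otab_1_5: "omult (obasis 1) (obasis 5) = - obasis 4"
  by (simp add: omult_def qmult_def qcnj_def obasis_def zero_prod_def)
lemma otab_1_6: "omult (obasis 1) (obasis 6) = - obasis 7"
  by (simp add: omult_def qmult_def qcnj_def obasis_def zero_prod_def)
lemma otab_1_7: "omult (obasis 1) (obasis 7) = obasis 6"
  by (simp add: omult_def qmult_def qcnj_def obasis_def zero_prod_def)
lemma otab_2_0: "omult (obasis 2) (obasis 0) = obasis 2"
  by (simp add: omult_def qmult_def qcnj_def obasis_def zero_prod_def)
lemma otab_2_1: "omult (obasis 2) (obasis 1) = - obasis 3"
  by (simp add: omult_def qmult_def qcnj_def obasis_def zero_prod_def)
lemma otab_2_2: "omult (obasis 2) (obasis 2) = - obasis 0"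
  by (simp add: omult_def qmult_def qcnj_def obasis_def zero_prod_def)
lemma otab_2_3: "omult (obasis 2) (obasis 3) = obasis 1"
  by (simp add: omult_def qmult_def qcnj_def obasis_def zero_prod_def)
lemma otab_2_4: "omult (obasis 2) (obasis 4) = obasis 6"
  by (simp add: omult_def qmult_def qcnj_def obasis_def zero_prod_def)
lemma otab_2_5: "omult (obasis 2) (obasis 5) = obasis 7"
  by (simp add: omult_def qmult_def qcnj_def obasis_def zero_prod_def)
lemma otab_2_6: "omult (obasis 2) (obasis 6) = - obasis 4"
  by (simp add: omult_def qmult_def qcnj_def obasis_def zero_prod_def)
lemma otab_2_7: "omult (obasis 2) (obasis 7) = - obasis 5"
  by (simp add: omult_def qmult_def qcnj_def obasis_def zero_prod_def)
lemma otab_3_0: "omult (obasis 3) (obasis 0) = obasis 3"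
  by (simp add: omult_def qmult_def qcnj_def obasis_def zero_prod_def)
lemma otab_3_1: "omult (obasis 3) (obasis 1) = obasis 2"
  by (simp add: omult_def qmult_def qcnj_def obasis_def zero_prod_def)
lemma otab_3_2: "omult (obasis 3) (obasis 2) = - obasis 1"
  by (simp add: omult_def qmult_def qcnj_def obasis_def zero_prod_def)
lemma otab_3_3: "omult (obasis 3) (obasis 3) = - obasis 0"
  by (simp add: omult_def qmult_def qcnj_def obasis_def zero_prod_def)
lemma otab_3_4: "omult (obasis 3) (obasis 4) = obasis 7"
  by (simp add: omult_def qmult_def qcnj_def obasis_def zero_prod_def)
lemma otab_3_5: "omult (obasis 3) (obasis 5) = - obasis 6"
  by (simp add: omult_def qmult_def qcnj_def obasis_def zero_prod_def)
lemma otab_3_6: "omult (obasis 3) (obasis 6) = obasis 5"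
  by (simp add: omult_def qmult_def qcnj_def obasis_def zero_prod_def)
lemma otab_3_7: "omult (obasis 3) (obasis 7) = - obasis 4"
  by (simp add: omult_def qmult_def qcnj_def obasis_def zero_prod_def)
lemma otab_4_0: "omult (obasis 4) (obasis 0) = obasis 4"
  by (simp add: omult_def qmult_def qcnj_def obasis_def zero_prod_def)
lemma otab_4_1: "omult (obasis 4) (obasis 1) = - obasis 5"
  by (simp add: omult_def qmult_def qcnj_def obasis_def zero_prod_def)
lemma otab_4_2: "omult (obasis 4) (obasis 2) = - obasis 6"
  by (simp add: omult_def qmult_def qcnj_def obasis_def zero_prod_def)
lemma otab_4_3: "omult (obasis 4) (obasis 3) = - obasis 7"
  by (simp add: omult_def qmult_def qcnj_def obasis_def zero_prod_def)
lemma otab_4_4: "omult (obasis 4) (obasis 4) = - obasis 0"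
  by (simp add: omult_def qmult_def qcnj_def obasis_def zero_prod_def)
lemma otab_4_5: "omult (obasis 4) (obasis 5) = obasis 1"
  by (simp add: omult_def qmult_def qcnj_def obasis_def zero_prod_def)
lemma otab_4_6: "omult (obasis 4) (obasis 6) = obasis 2"
  by (simp add: omult_def qmult_def qcnj_def obasis_def zero_prod_def)
lemma otab_4_7: "omult (obasis 4) (obasis 7) = obasis 3"
  by (simp add: omult_def qmult_def qcnj_def obasis_def zero_prod_def)
lemma otab_5_0: "omult (obasis 5) (obasis 0) = obasis 5"
  by (simp add: omult_def qmult_def qcnj_def obasis_def zero_prod_def)
lemma otab_5_1: "omult (obasis 5) (obasis 1) = obasis 4"
  by (simp add: omult_def qmult_def qcnj_def obasis_def zero_prod_def)
lemma otab_5_2: "omult (obasis 5) (obasis 2) = - obasis 7"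
  by (simp add: omult_def qmult_def qcnj_def obasis_def zero_prod_def)
lemma otab_5_3: "omult (obasis 5) (obasis 3) = obasis 6"
  by (simp add: omult_def qmult_def qcnj_def obasis_def zero_prod_def)
lemma otab_5_4: "omult (obasis 5) (obasis 4) = - obasis 1"
  by (simp add: omult_def qmult_def qcnj_def obasis_def zero_prod_def)
lemma otab_5_5: "omult (obasis 5) (obasis 5) = - obasis 0"
  by (simp add: omult_def qmult_def qcnj_def obasis_def zero_prod_def)
lemma otab_5_6: "omult (obasis 5) (obasis 6) = - obasis 3"
  by (simp add: omult_def qmult_def qcnj_def obasis_def zero_prod_def)
lemma otab_5_7: "omult (obasis 5) (obasis 7) = obasis 2"
  by (simp add: omult_def qmult_def qcnj_def obasis_def zero_prod_def)
lemma otab_6_0: "omult (obasis 6) (obasis 0) = obasis 6"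
  by (simp add: omult_def qmult_def qcnj_def obasis_def zero_prod_def)
lemma otab_6_1: "omult (obasis 6) (obasis 1) = obasis 7"
  by (simp add: omult_def qmult_def qcnj_def obasis_def zero_prod_def)
lemma otab_6_2: "omult (obasis 6) (obasis 2) = obasis 4"
  by (simp add: omult_def qmult_def qcnj_def obasis_def zero_prod_def)
lemma otab_6_3: "omult (obasis 6) (obasis 3) = - obasis 5"
  by (simp add: omult_def qmult_def qcnj_def obasis_def zero_prod_def)
lemma otab_6_4: "omult (obasis 6) (obasis 4) = - obasis 2"
  by (simp add: omult_def qmult_def qcnj_def obasis_def zero_prod_def)
lemma otab_6_5: "omult (obasis 6) (obasis 5) = obasis 3"
  by (simp add: omult_def qmult_def qcnj_def obasis_def zero_prod_def)
lemma otab_6_6: "omult (obasis 6) (obasis 6) = - obasis 0"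
  by (simp add: omult_def qmult_def qcnj_def obasis_def zero_prod_def)
lemma otab_6_7: "omult (obasis 6) (obasis 7) = - obasis 1"
  by (simp add: omult_def qmult_def qcnj_def obasis_def zero_prod_def)
lemma otab_7_0: "omult (obasis 7) (obasis 0) = obasis 7"
  by (simp add: omult_def qmult_def qcnj_def obasis_def zero_prod_def)
lemma otab_7_1: "omult (obasis 7) (obasis 1) = - obasis 6"
  by (simp add: omult_def qmult_def qcnj_def obasis_def zero_prod_def)
lemma otab_7_2: "omult (obasis 7) (obasis 2) = obasis 5"
  by (simp add: omult_def qmult_def qcnj_def obasis_def zero_prod_def)
lemma otab_7_3: "omult (obasis 7) (obasis 3) = obasis 4"
  by (simp add: omult_def qmult_def qcnj_def obasis_def zero_prod_def)
lemma otab_7_4: "omult (obasis 7) (obasis 4) = - obasis 3"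
  by (simp add: omult_def qmult_def qcnj_def obasis_def zero_prod_def)
lemma otab_7_5: "omult (obasis 7) (obasis 5) = - obasis 2"
  by (simp add: omult_def qmult_def qcnj_def obasis_def zero_prod_def)
lemma otab_7_6: "omult (obasis 7) (obasis 6) = obasis 1"
  by (simp add: omult_def qmult_def qcnj_def obasis_def zero_prod_def)
lemma otab_7_7: "omult (obasis 7) (obasis 7) = - obasis 0"
  by (simp add: omult_def qmult_def qcnj_def obasis_def zero_prod_def)
lemmas otab = otab_0_0 otab_0_1 otab_0_2 otab_0_3 otab_0_4 otab_0_5 otab_0_6 otab_0_7 otab_1_0 otab_1_1 otab_1_2 otab_1_3 otab_1_4 otab_1_5 otab_1_6 otab_1_7 otab_2_0 otab_2_1 otab_2_2 otab_2_3 otab_2_4 otab_2_5 otab_2_6 otab_2_7 otab_3_0 otab_3_1 otab_3_2 otab_3_3 otab_3_4 otab_3_5 otab_3_6 otab_3_7 otab_4_0 otab_4_1 otab_4_2 otab_4_3 otab_4_4 otab_4_5 otab_4_6 otab_4_7 otab_5_0 otab_5_1 otab_5_2 otab_5_3 otab_5_4 otab_5_5 otab_5_6 otab_5_7 otab_6_0 otab_6_1 otab_6_2 otab_6_3 otab_6_4 otab_6_5 otab_6_6 otab_6_7 otab_7_0 otab_7_1 otab_7_2 otab_7_3 otab_7_4 otab_7_5 otab_7_6 otab_7_7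

locale obim =
  fixes lm :: "oct \<Rightarrow> 'v::banach \<Rightarrow> 'v" and rm :: "'v \<Rightarrow> oct \<Rightarrow> 'v"
  assumes bim: "O_bimodule lm rm"
begin

lemma linL: "linear (lm p)" using bim unfolding O_bimodule_def by blast
lemma linL1: "linear (\<lambda>p. lm p x)" using bim unfolding O_bimodule_def by blast
lemma linR: "linear (\<lambda>x. rm x p)" using bim unfolding O_bimodule_def by blast
lemma linR1: "linear (rm x)" using bim unfolding O_bimodule_def by blast

lemma lm_add: "lm p (x + y) = lm p x + lm p y" by (rule real_vector.linear_add[OF linL])
lemma lm_diff: "lm p (x - y) = lm p x - lm p y" by (rule real_vector.linear_diff[OF linL])
lemma lm_minus: "lm p (- x) = - lm p x" by (rule real_vector.linear_neg[OF linL])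
lemma lm_scale: "lm p (c *\<^sub>R x) = c *\<^sub>R lm p x" by (rule linear_cmul[OF linL])
lemma lm_zero: "lm p 0 = 0" by (rule real_vector.linear_0[OF linL])
lemma lm_addL: "lm (p + q) x = lm p x + lm q x" using real_vector.linear_add[OF linL1[of x]] by simp
lemma lm_diffL: "lm (p - q) x = lm p x - lm q x" using real_vector.linear_diff[OF linL1[of x]] by simp
lemma lm_minusL: "lm (- p) x = - lm p x" using real_vector.linear_neg[OF linL1[of x]] by simp
lemma lm_scaleL: "lm (c *\<^sub>R p) x = c *\<^sub>R lm p x" using linear_cmul[OF linL1[of x]] by simp
lemma lm_zeroL: "lm 0 x = 0" using real_vector.linear_0[OF linL1[of x]] by simp
lemma rm_add: "rm (x + y) p = rm x p + rm y p" using real_vector.linear_add[OF linR] by simp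
lemma rm_diff: "rm (x - y) p = rm x p - rm y p" using real_vector.linear_diff[OF linR] by simp
lemma rm_minus: "rm (- x) p = - rm x p" using real_vector.linear_neg[OF linR] by simp
lemma rm_scale: "rm (c *\<^sub>R x) p = c *\<^sub>R rm x p" using linear_cmul[OF linR] by simp
lemma rm_zero: "rm 0 p = 0" using real_vector.linear_0[OF linR] by simp
lemma rm_addR: "rm x (p + q) = rm x p + rm x q" by (rule real_vector.linear_add[OF linR1])
lemma rm_diffR: "rm x (p - q) = rm x p - rm x q" by (rule real_vector.linear_diff[OF linR1])
lemma rm_minusR: "rm x (- p) = - rm x p" by (rule real_vector.linear_neg[OF linR1])
lemma rm_scaleR: "rm x (c *\<^sub>R p) = c *\<^sub>R rm x p" by (rule linear_cmul[OF linR1])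
lemma rm_zeroR: "rm x 0 = 0" by (rule real_vector.linear_0[OF linR1])
lemma lm_one: "lm oone x = x" using bim unfolding O_bimodule_def by blast
lemma rm_one: "rm x oone = x" using bim unfolding O_bimodule_def by blast
lemma lm_ob0: "lm (obasis 0) x = x" by (simp add: ob0 lm_one)
lemma rm_ob0: "rm x (obasis 0) = x" by (simp add: ob0 rm_one)

lemmas lin = lm_add lm_diff lm_minus lm_scale lm_zero lm_addL lm_diffL lm_minusL lm_scaleL lm_zeroL
  rm_add rm_diff rm_minus rm_scale rm_zero rm_addR rm_diffR rm_minusR rm_scaleR rm_zeroR lm_ob0 rm_ob0

definition dAB where "dAB p q x = lm (omult p q) x - lm p (lm q x) - (rm (lm q x) p - lm q (rm x p))"
definition dBC where "dBC p q x = rm (lm q x) p - lm q (rm x p) - (rm (rm x p) q - rm x (omult p q))"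
definition dCD where "dCD p q x = rm (rm x p) q - rm x (omult p q) + (lm (omult q p) x - lm q (lm p x))"

lemma ax: "assocL lm p q x = assocM lm rm q x p \<and> assocM lm rm q x p = assocR rm x p q \<and> assocR rm x p q = - assocL lm q p x"
  using bim unfolding O_bimodule_def by blast
lemma dAB0: "dAB p q x = 0" using ax[of p q x] unfolding assocL_def assocM_def assocR_def dAB_def by simp
lemma dBC0: "dBC p q x = 0" using ax[of p q x] unfolding assocL_def assocM_def assocR_def dBC_def by simp
lemma dCD0: "dCD p q x = 0" using ax[of p q x] unfolding assocL_def assocM_def assocR_def dCD_def by simp


lemma assocL_anti: "assocL lm p q x = - assocL lm q p x"
  using ax[of p q x] by simp
lemma assocR_anti: "assocR rm x p q = - assocR rm x q p"
proof -
  have "assocR rm x p q = - assocL lm q p x" using ax[of p q x] by simp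
  moreover have "assocL lm q p x = assocR rm x q p" using ax[of q p x] by simp
  ultimately show ?thesis by simp
qed
lemma altL: "lm (omult p p) x = lm p (lm p x)"
proof -
  have "assocL lm p p x = - assocL lm p p x" by (rule assocL_anti)
  hence "assocL lm p p x = 0" by (metis add.inverse_unique neg_equal_0_iff_equal add_cancel_right_right add_diff_cancel diff_minus_eq_add minus_diff_eq scaleR_2 scaleR_eq_0_iff zero_neq_numeral)
  thus ?thesis by (simp add: assocL_def)
qed
lemma altR: "rm (rm x p) p = rm x (omult p p)"
proof -
  have "assocR rm x p p = - assocR rm x p p" by (rule assocR_anti)
  hence "assocR rm x p p = 0" by (metis add.inverse_unique neg_equal_0_iff_equal add_cancel_right_right add_diff_cancel diff_minus_eq_add minus_diff_eq scaleR_2 scaleR_eq_0_iff zero_neq_numeral)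
  thus ?thesis by (simp add: assocR_def)
qed

lemma R_1: "rm y (obasis 1) = (-1/2) *\<^sub>R (lm (obasis 1) (y)) + (1/2) *\<^sub>R (lm (obasis 2) (lm (obasis 3) (y))) + (1/2) *\<^sub>R (lm (obasis 4) (lm (obasis 5) (y))) + (-1/2) *\<^sub>R (lm (obasis 6) (lm (obasis 7) (y)))"
proof -
  have "rm y (obasis 1) - ((-1/2) *\<^sub>R (lm (obasis 1) (y)) + (1/2) *\<^sub>R (lm (obasis 2) (lm (obasis 3) (y))) + (1/2) *\<^sub>R (lm (obasis 4) (lm (obasis 5) (y))) + (-1/2) *\<^sub>R (lm (obasis 6) (lm (obasis 7) (y)))) = (1/2) *\<^sub>R ((1) *\<^sub>R (dAB (obasis 2) (obasis 3) (y)) + (-1) *\<^sub>R (dAB (obasis 3) (obasis 2) (y)) + (-1) *\<^sub>R (dAB (obasis 4) (obasis 2) (lm (obasis 7) (y))) + (1) *\<^sub>R (dAB (obasis 4) (obasis 5) (y)) + (-1) *\<^sub>R (dAB (obasis 4) (obasis 7) (lm (obasis 2) (y))) + (1) *\<^sub>R (dAB (obasis 7) (obasis 2) (rm (y) (obasis 4))) + (1) *\<^sub>R (dBC (obasis 2) (obasis 3) (y)) + (-1) *\<^sub>R (dBC (obasis 2) (obasis 7) (rm (y) (obasis 4))) + (-1) *\<^sub>R (dBC (obasis 3) (obasis 2) (y)) + (-1) *\<^sub>R (dBC (obasis 4) (obasis 2) (lm (obasis 7) (y))) + (1) *\<^sub>R (dBC (obasis 4) (obasis 5) (y)) + (-1)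 *\<^sub>R (dBC (obasis 4) (obasis 7) (lm (obasis 2) (y))) + (-1) *\<^sub>R (dBC (obasis 6) (obasis 7) (y)) + (1) *\<^sub>R (dBC (obasis 7) (obasis 2) (rm (y) (obasis 4))) + (1) *\<^sub>R (dCD (obasis 2) (obasis 3) (y)) + (-1) *\<^sub>R (dCD (obasis 2) (obasis 7) (rm (y) (obasis 4))) + (-1) *\<^sub>R (dCD (obasis 4) (obasis 7) (lm (obasis 2) (y))) + (-1) *\<^sub>R (dCD (obasis 6) (obasis 7) (y)) + (1) *\<^sub>R (lm (obasis 4) (dAB (obasis 2) (obasis 7) (y))) + (1) *\<^sub>R (lm (obasis 4) (dBC (obasis 2) (obasis 7) (y))) + (1) *\<^sub>R (lm (obasis 4) (dCD (obasis 2) (obasis 7) (y))) + (1) *\<^sub>R (lm (obasis 7) (dAB (obasis 4) (obasis 2) (y))) + (1) *\<^sub>R (lm (obasis 7) (dBC (obasis 4) (obasis 2) (y))) + (-1) *\<^sub>R (rm (dBC (obasis 4) (obasis 7) (y)) (obasis 2)))"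
    unfolding dAB_def dBC_def dCD_def by (simp only: lin otab; norm)
  also have "\<dots> = 0" by (simp add: dAB0 dBC0 dCD0 lin)
  finally show ?thesis by simp
qed

lemma R_2: "rm y (obasis 2) = (-1/2) *\<^sub>R (lm (obasis 1) (lm (obasis 3) (y))) + (-1/2) *\<^sub>R (lm (obasis 2) (y)) + (1/2) *\<^sub>R (lm (obasis 4) (lm (obasis 6) (y))) + (1/2) *\<^sub>R (lm (obasis 5) (lm (obasis 7) (y)))"
proof -
  have "rm y (obasis 2) - ((-1/2) *\<^sub>R (lm (obasis 1) (lm (obasis 3) (y))) + (-1/2) *\<^sub>R (lm (obasis 2) (y)) + (1/2) *\<^sub>R (lm (obasis 4) (lm (obasis 6) (y))) + (1/2) *\<^sub>R (lm (obasis 5) (lm (obasis 7) (y)))) = (1/2) *\<^sub>R ((-1) *\<^sub>R (dAB (obasis 1) (obasis 3) (y)) + (1) *\<^sub>R (dAB (obasis 3) (obasis 1) (y)) + (1) *\<^sub>R (dAB (obasis 4) (obasis 1) (lm (obasis 7) (y))) + (1) *\<^sub>R (dAB (obasis 4) (obasis 6) (y)) + (1) *\<^sub>R (dAB (obasis 4) (obasis 7) (lm (obasis 1) (y))) + (-1) *\<^sub>R (dAB (obasis 7) (obasis 1) (rm (y) (obasis 4))) + (-1) *\<^sub>R (dBC (obasis 1) (obasis 3) (y)) + (1) *\<^sub>R (dBC (obasis 1) (obasis 7) (rm (y) (obasis 4))) + (1) *\<^sub>R (dBC (obasis 3) (obasis 1) (y)) + (1) *\<^sub>R (dBC (obasis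 4) (obasis 1) (lm (obasis 7) (y))) + (1) *\<^sub>R (dBC (obasis 4) (obasis 6) (y)) + (1) *\<^sub>R (dBC (obasis 4) (obasis 7) (lm (obasis 1) (y))) + (1) *\<^sub>R (dBC (obasis 5) (obasis 7) (y)) + (-1) *\<^sub>R (dBC (obasis 7) (obasis 1) (rm (y) (obasis 4))) + (-1) *\<^sub>R (dCD (obasis 1) (obasis 3) (y)) + (1) *\<^sub>R (dCD (obasis 1) (obasis 7) (rm (y) (obasis 4))) + (1) *\<^sub>R (dCD (obasis 4) (obasis 7) (lm (obasis 1) (y))) + (1) *\<^sub>R (dCD (obasis 5) (obasis 7) (y)) + (-1) *\<^sub>R (lm (obasis 4) (dAB (obasis 1) (obasis 7) (y))) + (-1) *\<^sub>R (lm (obasis 4) (dBC (obasis 1) (obasis 7) (y))) + (-1) *\<^sub>R (lm (obasis 4) (dCD (obasis 1) (obasis 7) (y))) + (-1) *\<^sub>R (lm (obasis 7) (dAB (obasis 4) (obasis 1) (y))) + (-1) *\<^sub>R (lm (obasis 7) (dBC (obasis 4) (obasis 1) (y))) + (1) *\<^sub>R (rm (dBC (obasis 4) (obasis 7) (y)) (obasis 1)))"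
    unfolding dAB_def dBC_def dCD_def by (simp only: lin otab; norm)
  also have "\<dots> = 0" by (simp add: dAB0 dBC0 dCD0 lin)
  finally show ?thesis by simp
qed

lemma R_3: "rm y (obasis 3) = (1/2) *\<^sub>R (lm (obasis 1) (lm (obasis 2) (y))) + (-1/2) *\<^sub>R (lm (obasis 3) (y)) + (1/2) *\<^sub>R (lm (obasis 4) (lm (obasis 7) (y))) + (-1/2) *\<^sub>R (lm (obasis 5) (lm (obasis 6) (y)))"
proof -
  have "rm y (obasis 3) - ((1/2) *\<^sub>R (lm (obasis 1) (lm (obasis 2) (y))) + (-1/2) *\<^sub>R (lm (obasis 3) (y)) + (1/2) *\<^sub>R (lm (obasis 4) (lm (obasis 7) (y))) + (-1/2) *\<^sub>R (lm (obasis 5) (lm (obasis 6) (y)))) = (1/2) *\<^sub>R ((1) *\<^sub>R (dAB (obasis 1) (obasis 2) (y)) + (-1) *\<^sub>R (dAB (obasis 2) (obasis 1) (y)) + (-1) *\<^sub>R (dAB (obasis 4) (obasis 1) (lm (obasis 6) (y))) + (-1) *\<^sub>R (dAB (obasis 4) (obasis 6) (lm (obasis 1) (y))) + (1) *\<^sub>R (dAB (obasis 4) (obasis 7) (y)) + (1) *\<^sub>R (dAB (obasis 6) (obasis 1) (rm (y) (obasis 4))) + (1) *\<^sub>R (dBC (obasis 1) (obasis 2) (y)) + (-1) *\<^sub>R (dBC (obasis 1) (obasis 6) (rm (y) (obasis 4))) + (-1) *\<^sub>R (dBC (obasis 2) (obasis 1) (y)) + (-1) *\<^sub>R (dBC (obasis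 4) (obasis 1) (lm (obasis 6) (y))) + (-1) *\<^sub>R (dBC (obasis 4) (obasis 6) (lm (obasis 1) (y))) + (1) *\<^sub>R (dBC (obasis 4) (obasis 7) (y)) + (-1) *\<^sub>R (dBC (obasis 5) (obasis 6) (y)) + (1) *\<^sub>R (dBC (obasis 6) (obasis 1) (rm (y) (obasis 4))) + (1) *\<^sub>R (dCD (obasis 1) (obasis 2) (y)) + (-1) *\<^sub>R (dCD (obasis 1) (obasis 6) (rm (y) (obasis 4))) + (-1) *\<^sub>R (dCD (obasis 4) (obasis 6) (lm (obasis 1) (y))) + (-1) *\<^sub>R (dCD (obasis 5) (obasis 6) (y)) + (1) *\<^sub>R (lm (obasis 4) (dAB (obasis 1) (obasis 6) (y))) + (1) *\<^sub>R (lm (obasis 4) (dBC (obasis 1) (obasis 6) (y))) + (1) *\<^sub>R (lm (obasis 4) (dCD (obasis 1) (obasis 6) (y))) + (1) *\<^sub>R (lm (obasis 6) (dAB (obasis 4) (obasis 1) (y))) + (1) *\<^sub>R (lm (obasis 6) (dBC (obasis 4) (obasis 1) (y))) + (-1) *\<^sub>R (rm (dBC (obasis 4) (obasis 6) (y)) (obasis 1)))"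
    unfolding dAB_def dBC_def dCD_def by (simp only: lin otab; norm)
  also have "\<dots> = 0" by (simp add: dAB0 dBC0 dCD0 lin)
  finally show ?thesis by simp
qed

lemma R_4: "rm y (obasis 4) = (-1/2) *\<^sub>R (lm (obasis 1) (lm (obasis 5) (y))) + (-1/2) *\<^sub>R (lm (obasis 2) (lm (obasis 6) (y))) + (-1/2) *\<^sub>R (lm (obasis 3) (lm (obasis 7) (y))) + (-1/2) *\<^sub>R (lm (obasis 4) (y))"
proof -
  have "rm y (obasis 4) - ((-1/2) *\<^sub>R (lm (obasis 1) (lm (obasis 5) (y))) + (-1/2) *\<^sub>R (lm (obasis 2) (lm (obasis 6) (y))) + (-1/2) *\<^sub>R (lm (obasis 3) (lm (obasis 7) (y))) + (-1/2) *\<^sub>R (lm (obasis 4) (y))) = (1/2) *\<^sub>R ((-1) *\<^sub>R (dAB (obasis 1) (obasis 5) (y)) + (-1) *\<^sub>R (dAB (obasis 2) (obasis 1) (lm (obasis 7) (y))) + (-1) *\<^sub>R (dAB (obasis 2) (obasis 6) (y)) + (-1) *\<^sub>R (dAB (obasis 2) (obasis 7) (lm (obasis 1) (y))) + (1) *\<^sub>R (dAB (obasis 5) (obasis 1) (y)) + (1) *\<^sub>R (dAB (obasis 7) (obasis 1) (rm (y) (obasis 2))) + (-1) *\<^sub>R (dBC (obasis 1) (obasis 5) (y)) + (-1) *\<^sub>R (dBC (obasis 1) (obasis 7) (rm (y) (obasis 2))) + (-1) *\<^sub>R (dBC (obasis 2) (obasis 1) (lm (obasis 7) (y))) + (-1)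 *\<^sub>R (dBC (obasis 2) (obasis 6) (y)) + (-1) *\<^sub>R (dBC (obasis 2) (obasis 7) (lm (obasis 1) (y))) + (-1) *\<^sub>R (dBC (obasis 3) (obasis 7) (y)) + (1) *\<^sub>R (dBC (obasis 5) (obasis 1) (y)) + (1) *\<^sub>R (dBC (obasis 7) (obasis 1) (rm (y) (obasis 2))) + (-1) *\<^sub>R (dCD (obasis 1) (obasis 5) (y)) + (-1) *\<^sub>R (dCD (obasis 1) (obasis 7) (rm (y) (obasis 2))) + (-1) *\<^sub>R (dCD (obasis 2) (obasis 7) (lm (obasis 1) (y))) + (-1) *\<^sub>R (dCD (obasis 3) (obasis 7) (y)) + (1) *\<^sub>R (lm (obasis 2) (dAB (obasis 1) (obasis 7) (y))) + (1) *\<^sub>R (lm (obasis 2) (dBC (obasis 1) (obasis 7) (y))) + (1) *\<^sub>R (lm (obasis 2) (dCD (obasis 1) (obasis 7) (y))) + (1) *\<^sub>R (lm (obasis 7) (dAB (obasis 2) (obasis 1) (y))) + (1) *\<^sub>R (lm (obasis 7) (dBC (obasis 2) (obasis 1) (y))) + (-1) *\<^sub>R (rm (dBC (obasis 2) (obasis 7) (y)) (obasis 1)))"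
    unfolding dAB_def dBC_def dCD_def by (simp only: lin otab; norm)
  also have "\<dots> = 0" by (simp add: dAB0 dBC0 dCD0 lin)
  finally show ?thesis by simp
qed

lemma R_5: "rm y (obasis 5) = (1/2) *\<^sub>R (lm (obasis 1) (lm (obasis 4) (y))) + (-1/2) *\<^sub>R (lm (obasis 2) (lm (obasis 7) (y))) + (1/2) *\<^sub>R (lm (obasis 3) (lm (obasis 6) (y))) + (-1/2) *\<^sub>R (lm (obasis 5) (y))"
proof -
  have "rm y (obasis 5) - ((1/2) *\<^sub>R (lm (obasis 1) (lm (obasis 4) (y))) + (-1/2) *\<^sub>R (lm (obasis 2) (lm (obasis 7) (y))) + (1/2) *\<^sub>R (lm (obasis 3) (lm (obasis 6) (y))) + (-1/2) *\<^sub>R (lm (obasis 5) (y))) = (1/2) *\<^sub>R ((1) *\<^sub>R (dAB (obasis 1) (obasis 4) (y)) + (1) *\<^sub>R (dAB (obasis 2) (obasis 1) (lm (obasis 6) (y))) + (1) *\<^sub>R (dAB (obasis 2) (obasis 6) (lm (obasis 1) (y))) + (-1) *\<^sub>R (dAB (obasis 2) (obasis 7) (y)) + (-1) *\<^sub>R (dAB (obasis 4) (obasis 1) (y)) + (-1) *\<^sub>R (dAB (obasis 6) (obasis 1) (rm (y) (obasis 2))) + (1) *\<^sub>R (dBC (obasis 1) (obasis 4) (y)) + (1) *\<^sub>R (dBC (obasis 1) (obasis 6) (rm (y) (obasis 2))) + (1) *\<^sub>R (dBC (obasis 2) (obasis 1) (lm (obasis 6) (y))) + (1) *\<^sub>R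 (dBC (obasis 2) (obasis 6) (lm (obasis 1) (y))) + (-1) *\<^sub>R (dBC (obasis 2) (obasis 7) (y)) + (1) *\<^sub>R (dBC (obasis 3) (obasis 6) (y)) + (-1) *\<^sub>R (dBC (obasis 4) (obasis 1) (y)) + (-1) *\<^sub>R (dBC (obasis 6) (obasis 1) (rm (y) (obasis 2))) + (1) *\<^sub>R (dCD (obasis 1) (obasis 4) (y)) + (1) *\<^sub>R (dCD (obasis 1) (obasis 6) (rm (y) (obasis 2))) + (1) *\<^sub>R (dCD (obasis 2) (obasis 6) (lm (obasis 1) (y))) + (1) *\<^sub>R (dCD (obasis 3) (obasis 6) (y)) + (-1) *\<^sub>R (lm (obasis 2) (dAB (obasis 1) (obasis 6) (y))) + (-1) *\<^sub>R (lm (obasis 2) (dBC (obasis 1) (obasis 6) (y))) + (-1) *\<^sub>R (lm (obasis 2) (dCD (obasis 1) (obasis 6) (y))) + (-1) *\<^sub>R (lm (obasis 6) (dAB (obasis 2) (obasis 1) (y))) + (-1) *\<^sub>R (lm (obasis 6) (dBC (obasis 2) (obasis 1) (y))) + (1) *\<^sub>R (rm (dBC (obasis 2) (obasis 6) (y)) (obasis 1)))"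
    unfolding dAB_def dBC_def dCD_def by (simp only: lin otab; norm)
  also have "\<dots> = 0" by (simp add: dAB0 dBC0 dCD0 lin)
  finally show ?thesis by simp
qed

lemma R_6: "rm y (obasis 6) = (1/2) *\<^sub>R (lm (obasis 1) (lm (obasis 7) (y))) + (1/2) *\<^sub>R (lm (obasis 2) (lm (obasis 4) (y))) + (-1/2) *\<^sub>R (lm (obasis 3) (lm (obasis 5) (y))) + (-1/2) *\<^sub>R (lm (obasis 6) (y))"
proof -
  have "rm y (obasis 6) - ((1/2) *\<^sub>R (lm (obasis 1) (lm (obasis 7) (y))) + (1/2) *\<^sub>R (lm (obasis 2) (lm (obasis 4) (y))) + (-1/2) *\<^sub>R (lm (obasis 3) (lm (obasis 5) (y))) + (-1/2) *\<^sub>R (lm (obasis 6) (y))) = (1/2) *\<^sub>R ((1) *\<^sub>R (dAB (obasis 1) (obasis 7) (y)) + (-1) *\<^sub>R (dAB (obasis 2) (obasis 1) (lm (obasis 5) (y))) + (1) *\<^sub>R (dAB (obasis 2) (obasis 4) (y)) + (-1) *\<^sub>R (dAB (obasis 2) (obasis 5) (lm (obasis 1) (y))) + (1) *\<^sub>R (dAB (obasis 5) (obasis 1) (rm (y) (obasis 2))) + (-1) *\<^sub>R (dAB (obasis 7) (obasis 1) (y)) + (-1) *\<^sub>R (dBC (obasis 1) (obasis 5) (rm (y) (obasis 2))) + (1) *\<^sub>R (dBC (obasis 1) (obasis 7) (y)) + (-1) *\<^sub>R (dBC (obasis 2) (obasis 1) (lm (obasis 5) (y))) + (1) *\<^sub>R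 (dBC (obasis 2) (obasis 4) (y)) + (-1) *\<^sub>R (dBC (obasis 2) (obasis 5) (lm (obasis 1) (y))) + (-1) *\<^sub>R (dBC (obasis 3) (obasis 5) (y)) + (1) *\<^sub>R (dBC (obasis 5) (obasis 1) (rm (y) (obasis 2))) + (-1) *\<^sub>R (dBC (obasis 7) (obasis 1) (y)) + (-1) *\<^sub>R (dCD (obasis 1) (obasis 5) (rm (y) (obasis 2))) + (1) *\<^sub>R (dCD (obasis 1) (obasis 7) (y)) + (-1) *\<^sub>R (dCD (obasis 2) (obasis 5) (lm (obasis 1) (y))) + (-1) *\<^sub>R (dCD (obasis 3) (obasis 5) (y)) + (1) *\<^sub>R (lm (obasis 2) (dAB (obasis 1) (obasis 5) (y))) + (1) *\<^sub>R (lm (obasis 2) (dBC (obasis 1) (obasis 5) (y))) + (1) *\<^sub>R (lm (obasis 2) (dCD (obasis 1) (obasis 5) (y))) + (1) *\<^sub>R (lm (obasis 5) (dAB (obasis 2) (obasis 1) (y))) + (1) *\<^sub>R (lm (obasis 5) (dBC (obasis 2) (obasis 1) (y))) + (-1) *\<^sub>R (rm (dBC (obasis 2) (obasis 5) (y)) (obasis 1)))"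
    unfolding dAB_def dBC_def dCD_def by (simp only: lin otab; norm)
  also have "\<dots> = 0" by (simp add: dAB0 dBC0 dCD0 lin)
  finally show ?thesis by simp
qed

lemma R_7: "rm y (obasis 7) = (-1/2) *\<^sub>R (lm (obasis 1) (lm (obasis 6) (y))) + (1/2) *\<^sub>R (lm (obasis 2) (lm (obasis 5) (y))) + (1/2) *\<^sub>R (lm (obasis 3) (lm (obasis 4) (y))) + (-1/2) *\<^sub>R (lm (obasis 7) (y))"
proof -
  have "rm y (obasis 7) - ((-1/2) *\<^sub>R (lm (obasis 1) (lm (obasis 6) (y))) + (1/2) *\<^sub>R (lm (obasis 2) (lm (obasis 5) (y))) + (1/2) *\<^sub>R (lm (obasis 3) (lm (obasis 4) (y))) + (-1/2) *\<^sub>R (lm (obasis 7) (y))) = (1/2) *\<^sub>R ((-1) *\<^sub>R (dAB (obasis 1) (obasis 6) (y)) + (1) *\<^sub>R (dAB (obasis 2) (obasis 1) (lm (obasis 4) (y))) + (1) *\<^sub>R (dAB (obasis 2) (obasis 4) (lm (obasis 1) (y))) + (1) *\<^sub>R (dAB (obasis 2) (obasis 5) (y)) + (-1) *\<^sub>R (dAB (obasis 4) (obasis 1) (rm (y) (obasis 2))) + (1) *\<^sub>R (dAB (obasis 6) (obasis 1) (y)) + (1) *\<^sub>R (dBC (obasis 1) (obasis 4) (rm (y) (obasis 2))) + (-1) *\<^sub>R (dBC (obasis 1) (obasis 6) (y)) + (1) *\<^sub>R (dBC (obasis 2) (obasis 1) (lm (obasis 4) (y))) + (1) *\<^sub>R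 (dBC (obasis 2) (obasis 4) (lm (obasis 1) (y))) + (1) *\<^sub>R (dBC (obasis 2) (obasis 5) (y)) + (1) *\<^sub>R (dBC (obasis 3) (obasis 4) (y)) + (-1) *\<^sub>R (dBC (obasis 4) (obasis 1) (rm (y) (obasis 2))) + (1) *\<^sub>R (dBC (obasis 6) (obasis 1) (y)) + (1) *\<^sub>R (dCD (obasis 1) (obasis 4) (rm (y) (obasis 2))) + (-1) *\<^sub>R (dCD (obasis 1) (obasis 6) (y)) + (1) *\<^sub>R (dCD (obasis 2) (obasis 4) (lm (obasis 1) (y))) + (1) *\<^sub>R (dCD (obasis 3) (obasis 4) (y)) + (-1) *\<^sub>R (lm (obasis 2) (dAB (obasis 1) (obasis 4) (y))) + (-1) *\<^sub>R (lm (obasis 2) (dBC (obasis 1) (obasis 4) (y))) + (-1) *\<^sub>R (lm (obasis 2) (dCD (obasis 1) (obasis 4) (y))) + (-1) *\<^sub>R (lm (obasis 4) (dAB (obasis 2) (obasis 1) (y))) + (-1) *\<^sub>R (lm (obasis 4) (dBC (obasis 2) (obasis 1) (y))) + (1) *\<^sub>R (rm (dBC (obasis 2) (obasis 4) (y)) (obasis 1)))"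
    unfolding dAB_def dBC_def dCD_def by (simp only: lin otab; norm)
  also have "\<dots> = 0" by (simp add: dAB0 dBC0 dCD0 lin)
  finally show ?thesis by simp
qed

lemmas Rrules = R_1 R_2 R_3 R_4 R_5 R_6 R_7

lemma LL_1_1: "lm (obasis 1) (lm (obasis 1) y) = - y"
  using altL[of "obasis 1" y] by (simp add: otab lin)

lemma LL_2_2: "lm (obasis 2) (lm (obasis 2) y) = - y"
  using altL[of "obasis 2" y] by (simp add: otab lin)

lemma LL_3_3: "lm (obasis 3) (lm (obasis 3) y) = - y"
  using altL[of "obasis 3" y] by (simp add: otab lin)

lemma LL_4_4: "lm (obasis 4) (lm (obasis 4) y) = - y"
  using altL[of "obasis 4" y] by (simp add: otab lin)

lemma LL_5_5: "lm (obasis 5) (lm (obasis 5) y) = - y"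
  using altL[of "obasis 5" y] by (simp add: otab lin)

lemma LL_6_6: "lm (obasis 6) (lm (obasis 6) y) = - y"
  using altL[of "obasis 6" y] by (simp add: otab lin)

lemma LL_7_7: "lm (obasis 7) (lm (obasis 7) y) = - y"
  using altL[of "obasis 7" y] by (simp add: otab lin)

lemma LL_2_1: "lm (obasis 2) (lm (obasis 1) y) = - lm (obasis 1) (lm (obasis 2) y)"
  using assocL_anti[of "obasis 2" "obasis 1" y] by (simp add: otab lin assocL_def; metis minus_minus)

lemma LL_3_1: "lm (obasis 3) (lm (obasis 1) y) = - lm (obasis 1) (lm (obasis 3) y)"
  using assocL_anti[of "obasis 3" "obasis 1" y] by (simp add: otab lin assocL_def; metis minus_minus)

lemma LL_3_2: "lm (obasis 3) (lm (obasis 2) y) = - lm (obasis 2) (lm (obasis 3) y)"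
  using assocL_anti[of "obasis 3" "obasis 2" y] by (simp add: otab lin assocL_def; metis minus_minus)

lemma LL_4_1: "lm (obasis 4) (lm (obasis 1) y) = - lm (obasis 1) (lm (obasis 4) y)"
  using assocL_anti[of "obasis 4" "obasis 1" y] by (simp add: otab lin assocL_def; metis minus_minus)

lemma LL_4_2: "lm (obasis 4) (lm (obasis 2) y) = - lm (obasis 2) (lm (obasis 4) y)"
  using assocL_anti[of "obasis 4" "obasis 2" y] by (simp add: otab lin assocL_def; metis minus_minus)

lemma LL_4_3: "lm (obasis 4) (lm (obasis 3) y) = - lm (obasis 3) (lm (obasis 4) y)"
  using assocL_anti[of "obasis 4" "obasis 3" y] by (simp add: otab lin assocL_def; metis minus_minus)

lemma LL_5_1: "lm (obasis 5) (lm (obasis 1) y) = - lm (obasis 1) (lm (obasis 5) y)"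
  using assocL_anti[of "obasis 5" "obasis 1" y] by (simp add: otab lin assocL_def; metis minus_minus)

lemma LL_5_2: "lm (obasis 5) (lm (obasis 2) y) = - lm (obasis 2) (lm (obasis 5) y)"
  using assocL_anti[of "obasis 5" "obasis 2" y] by (simp add: otab lin assocL_def; metis minus_minus)

lemma LL_5_3: "lm (obasis 5) (lm (obasis 3) y) = - lm (obasis 3) (lm (obasis 5) y)"
  using assocL_anti[of "obasis 5" "obasis 3" y] by (simp add: otab lin assocL_def; metis minus_minus)

lemma LL_5_4: "lm (obasis 5) (lm (obasis 4) y) = - lm (obasis 4) (lm (obasis 5) y)"
  using assocL_anti[of "obasis 5" "obasis 4" y] by (simp add: otab lin assocL_def; metis minus_minus)

lemma LL_6_1: "lm (obasis 6) (lm (obasis 1) y) = - lm (obasis 1) (lm (obasis 6) y)"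
  using assocL_anti[of "obasis 6" "obasis 1" y] by (simp add: otab lin assocL_def; metis minus_minus)

lemma LL_6_2: "lm (obasis 6) (lm (obasis 2) y) = - lm (obasis 2) (lm (obasis 6) y)"
  using assocL_anti[of "obasis 6" "obasis 2" y] by (simp add: otab lin assocL_def; metis minus_minus)

lemma LL_6_3: "lm (obasis 6) (lm (obasis 3) y) = - lm (obasis 3) (lm (obasis 6) y)"
  using assocL_anti[of "obasis 6" "obasis 3" y] by (simp add: otab lin assocL_def; metis minus_minus)

lemma LL_6_4: "lm (obasis 6) (lm (obasis 4) y) = - lm (obasis 4) (lm (obasis 6) y)"
  using assocL_anti[of "obasis 6" "obasis 4" y] by (simp add: otab lin assocL_def; metis minus_minus)

lemma LL_6_5: "lm (obasis 6) (lm (obasis 5) y) = - lm (obasis 5) (lm (obasis 6) y)"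
  using assocL_anti[of "obasis 6" "obasis 5" y] by (simp add: otab lin assocL_def; metis minus_minus)

lemma LL_7_1: "lm (obasis 7) (lm (obasis 1) y) = - lm (obasis 1) (lm (obasis 7) y)"
  using assocL_anti[of "obasis 7" "obasis 1" y] by (simp add: otab lin assocL_def; metis minus_minus)

lemma LL_7_2: "lm (obasis 7) (lm (obasis 2) y) = - lm (obasis 2) (lm (obasis 7) y)"
  using assocL_anti[of "obasis 7" "obasis 2" y] by (simp add: otab lin assocL_def; metis minus_minus)

lemma LL_7_3: "lm (obasis 7) (lm (obasis 3) y) = - lm (obasis 3) (lm (obasis 7) y)"
  using assocL_anti[of "obasis 7" "obasis 3" y] by (simp add: otab lin assocL_def; metis minus_minus)

lemma LL_7_4: "lm (obasis 7) (lm (obasis 4) y) = - lm (obasis 4) (lm (obasis 7) y)"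
  using assocL_anti[of "obasis 7" "obasis 4" y] by (simp add: otab lin assocL_def; metis minus_minus)

lemma LL_7_5: "lm (obasis 7) (lm (obasis 5) y) = - lm (obasis 5) (lm (obasis 7) y)"
  using assocL_anti[of "obasis 7" "obasis 5" y] by (simp add: otab lin assocL_def; metis minus_minus)

lemma LL_7_6: "lm (obasis 7) (lm (obasis 6) y) = - lm (obasis 6) (lm (obasis 7) y)"
  using assocL_anti[of "obasis 7" "obasis 6" y] by (simp add: otab lin assocL_def; metis minus_minus)

lemmas LL = LL_1_1 LL_2_2 LL_3_3 LL_4_4 LL_5_5 LL_6_6 LL_7_7 LL_2_1 LL_3_1 LL_3_2 LL_4_1 LL_4_2 LL_4_3 LL_5_1 LL_5_2 LL_5_3 LL_5_4 LL_6_1 LL_6_2 LL_6_3 LL_6_4 LL_6_5 LL_7_1 LL_7_2 LL_7_3 LL_7_4 LL_7_5 LL_7_6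

definition rho where "rho y = (-1) *\<^sub>R (lm (obasis 1) (lm (obasis 2) (lm (obasis 3) (y)))) + (-1) *\<^sub>R (lm (obasis 1) (lm (obasis 4) (lm (obasis 5) (y)))) + (1) *\<^sub>R (lm (obasis 1) (lm (obasis 6) (lm (obasis 7) (y)))) + (1) *\<^sub>R (lm (obasis 2) (lm (obasis 3) (lm (obasis 4) (lm (obasis 5) (y))))) + (-1) *\<^sub>R (lm (obasis 2) (lm (obasis 3) (lm (obasis 6) (lm (obasis 7) (y))))) + (-1) *\<^sub>R (lm (obasis 4) (lm (obasis 5) (lm (obasis 6) (lm (obasis 7) (y)))))"

lemma rho0: "rho y = 0"
proof -
  have a: "rm (rm y (obasis 1)) (obasis 1) = - y" using altR[of y "obasis 1"] by (simp add: otab lin)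
  have "rho y = 2 *\<^sub>R (rm (rm y (obasis 1)) (obasis 1) + y)"
    unfolding rho_def by (simp only: R_1 lin LL; norm)
  then show ?thesis using a by simp
qed

lemma omega: "lm (obasis 1) (lm (obasis 2) (lm (obasis 3) (lm (obasis 4) (lm (obasis 5) (lm (obasis 6) (lm (obasis 7) (y))))))) = - y"
proof -
  have "lm (obasis 1) (lm (obasis 2) (lm (obasis 3) (lm (obasis 4) (lm (obasis 5) (lm (obasis 6) (lm (obasis 7) (y))))))) + y = (2/3) *\<^sub>R (rho y) + (-1/3) *\<^sub>R (lm (obasis 1) (lm (obasis 2) (lm (obasis 3) (rho y)))) + (-1/3) *\<^sub>R (lm (obasis 1) (lm (obasis 4) (lm (obasis 5) (rho y)))) + (1/3) *\<^sub>R (lm (obasis 1) (lm (obasis 6) (lm (obasis 7) (rho y))))"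
    unfolding rho_def by (simp only: lin LL; norm)
  then show ?thesis by (simp add: rho0 lin eq_neg_iff_add_eq_0)
qed

lemma Q_1234: "lm (obasis 1) (lm (obasis 2) (lm (obasis 3) (lm (obasis 4) (y)))) = - lm (obasis 5) (lm (obasis 6) (lm (obasis 7) (y)))"
proof -
  have e: "lm (obasis 1) (lm (obasis 2) (lm (obasis 3) (lm (obasis 4) (y)))) = lm (obasis 1) (lm (obasis 2) (lm (obasis 3) (lm (obasis 4) ((- lm (obasis 1) (lm (obasis 2) (lm (obasis 3) (lm (obasis 4) (lm (obasis 5) (lm (obasis 6) (lm (obasis 7) (y))))))))))))" using omega[of y] by (simp add: lin)
  show ?thesis by (subst e) (simp only: lin LL; norm)
qed

lemma Q_1235: "lm (obasis 1) (lm (obasis 2) (lm (obasis 3) (lm (obasis 5) (y)))) = lm (obasis 4) (lm (obasis 6) (lm (obasis 7) (y)))"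
proof -
  have e: "lm (obasis 1) (lm (obasis 2) (lm (obasis 3) (lm (obasis 5) (y)))) = lm (obasis 1) (lm (obasis 2) (lm (obasis 3) (lm (obasis 5) ((- lm (obasis 1) (lm (obasis 2) (lm (obasis 3) (lm (obasis 4) (lm (obasis 5) (lm (obasis 6) (lm (obasis 7) (y))))))))))))" using omega[of y] by (simp add: lin)
  show ?thesis by (subst e) (simp only: lin LL; norm)
qed

lemma Q_1236: "lm (obasis 1) (lm (obasis 2) (lm (obasis 3) (lm (obasis 6) (y)))) = - lm (obasis 4) (lm (obasis 5) (lm (obasis 7) (y)))"
proof -
  have e: "lm (obasis 1) (lm (obasis 2) (lm (obasis 3) (lm (obasis 6) (y)))) = lm (obasis 1) (lm (obasis 2) (lm (obasis 3) (lm (obasis 6) ((- lm (obasis 1) (lm (obasis 2) (lm (obasis 3) (lm (obasis 4) (lm (obasis 5) (lm (obasis 6) (lm (obasis 7) (y))))))))))))" using omega[of y] by (simp add: lin)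
  show ?thesis by (subst e) (simp only: lin LL; norm)
qed

lemma Q_1237: "lm (obasis 1) (lm (obasis 2) (lm (obasis 3) (lm (obasis 7) (y)))) = lm (obasis 4) (lm (obasis 5) (lm (obasis 6) (y)))"
proof -
  have e: "lm (obasis 1) (lm (obasis 2) (lm (obasis 3) (lm (obasis 7) (y)))) = lm (obasis 1) (lm (obasis 2) (lm (obasis 3) (lm (obasis 7) ((- lm (obasis 1) (lm (obasis 2) (lm (obasis 3) (lm (obasis 4) (lm (obasis 5) (lm (obasis 6) (lm (obasis 7) (y))))))))))))" using omega[of y] by (simp add: lin)
  show ?thesis by (subst e) (simp only: lin LL; norm)
qed

lemma Q_1245: "lm (obasis 1) (lm (obasis 2) (lm (obasis 4) (lm (obasis 5) (y)))) = - lm (obasis 3) (lm (obasis 6) (lm (obasis 7) (y)))"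
proof -
  have e: "lm (obasis 1) (lm (obasis 2) (lm (obasis 4) (lm (obasis 5) (y)))) = lm (obasis 1) (lm (obasis 2) (lm (obasis 4) (lm (obasis 5) ((- lm (obasis 1) (lm (obasis 2) (lm (obasis 3) (lm (obasis 4) (lm (obasis 5) (lm (obasis 6) (lm (obasis 7) (y))))))))))))" using omega[of y] by (simp add: lin)
  show ?thesis by (subst e) (simp only: lin LL; norm)
qed

lemma Q_1246: "lm (obasis 1) (lm (obasis 2) (lm (obasis 4) (lm (obasis 6) (y)))) = lm (obasis 3) (lm (obasis 5) (lm (obasis 7) (y)))"
proof -
  have e: "lm (obasis 1) (lm (obasis 2) (lm (obasis 4) (lm (obasis 6) (y)))) = lm (obasis 1) (lm (obasis 2) (lm (obasis 4) (lm (obasis 6) ((- lm (obasis 1) (lm (obasis 2) (lm (obasis 3) (lm (obasis 4) (lm (obasis 5) (lm (obasis 6) (lm (obasis 7) (y))))))))))))" using omega[of y] by (simp add: lin)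
  show ?thesis by (subst e) (simp only: lin LL; norm)
qed

lemma Q_1247: "lm (obasis 1) (lm (obasis 2) (lm (obasis 4) (lm (obasis 7) (y)))) = - lm (obasis 3) (lm (obasis 5) (lm (obasis 6) (y)))"
proof -
  have e: "lm (obasis 1) (lm (obasis 2) (lm (obasis 4) (lm (obasis 7) (y)))) = lm (obasis 1) (lm (obasis 2) (lm (obasis 4) (lm (obasis 7) ((- lm (obasis 1) (lm (obasis 2) (lm (obasis 3) (lm (obasis 4) (lm (obasis 5) (lm (obasis 6) (lm (obasis 7) (y))))))))))))" using omega[of y] by (simp add: lin)
  show ?thesis by (subst e) (simp only: lin LL; norm)
qed

lemma Q_1256: "lm (obasis 1) (lm (obasis 2) (lm (obasis 5) (lm (obasis 6) (y)))) = - lm (obasis 3) (lm (obasis 4) (lm (obasis 7) (y)))"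
proof -
  have e: "lm (obasis 1) (lm (obasis 2) (lm (obasis 5) (lm (obasis 6) (y)))) = lm (obasis 1) (lm (obasis 2) (lm (obasis 5) (lm (obasis 6) ((- lm (obasis 1) (lm (obasis 2) (lm (obasis 3) (lm (obasis 4) (lm (obasis 5) (lm (obasis 6) (lm (obasis 7) (y))))))))))))" using omega[of y] by (simp add: lin)
  show ?thesis by (subst e) (simp only: lin LL; norm)
qed

lemma Q_1257: "lm (obasis 1) (lm (obasis 2) (lm (obasis 5) (lm (obasis 7) (y)))) = lm (obasis 3) (lm (obasis 4) (lm (obasis 6) (y)))"
proof -
  have e: "lm (obasis 1) (lm (obasis 2) (lm (obasis 5) (lm (obasis 7) (y)))) = lm (obasis 1) (lm (obasis 2) (lm (obasis 5) (lm (obasis 7) ((- lm (obasis 1) (lm (obasis 2) (lm (obasis 3) (lm (obasis 4) (lm (obasis 5) (lm (obasis 6) (lm (obasis 7) (y))))))))))))" using omega[of y] by (simp add: lin)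
  show ?thesis by (subst e) (simp only: lin LL; norm)
qed

lemma Q_1267: "lm (obasis 1) (lm (obasis 2) (lm (obasis 6) (lm (obasis 7) (y)))) = - lm (obasis 3) (lm (obasis 4) (lm (obasis 5) (y)))"
proof -
  have e: "lm (obasis 1) (lm (obasis 2) (lm (obasis 6) (lm (obasis 7) (y)))) = lm (obasis 1) (lm (obasis 2) (lm (obasis 6) (lm (obasis 7) ((- lm (obasis 1) (lm (obasis 2) (lm (obasis 3) (lm (obasis 4) (lm (obasis 5) (lm (obasis 6) (lm (obasis 7) (y))))))))))))" using omega[of y] by (simp add: lin)
  show ?thesis by (subst e) (simp only: lin LL; norm)
qed

lemma Q_1345: "lm (obasis 1) (lm (obasis 3) (lm (obasis 4) (lm (obasis 5) (y)))) = lm (obasis 2) (lm (obasis 6) (lm (obasis 7) (y)))"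
proof -
  have e: "lm (obasis 1) (lm (obasis 3) (lm (obasis 4) (lm (obasis 5) (y)))) = lm (obasis 1) (lm (obasis 3) (lm (obasis 4) (lm (obasis 5) ((- lm (obasis 1) (lm (obasis 2) (lm (obasis 3) (lm (obasis 4) (lm (obasis 5) (lm (obasis 6) (lm (obasis 7) (y))))))))))))" using omega[of y] by (simp add: lin)
  show ?thesis by (subst e) (simp only: lin LL; norm)
qed

lemma Q_1346: "lm (obasis 1) (lm (obasis 3) (lm (obasis 4) (lm (obasis 6) (y)))) = - lm (obasis 2) (lm (obasis 5) (lm (obasis 7) (y)))"
proof -
  have e: "lm (obasis 1) (lm (obasis 3) (lm (obasis 4) (lm (obasis 6) (y)))) = lm (obasis 1) (lm (obasis 3) (lm (obasis 4) (lm (obasis 6) ((- lm (obasis 1) (lm (obasis 2) (lm (obasis 3) (lm (obasis 4) (lm (obasis 5) (lm (obasis 6) (lm (obasis 7) (y))))))))))))" using omega[of y] by (simp add: lin)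
  show ?thesis by (subst e) (simp only: lin LL; norm)
qed

lemma Q_1347: "lm (obasis 1) (lm (obasis 3) (lm (obasis 4) (lm (obasis 7) (y)))) = lm (obasis 2) (lm (obasis 5) (lm (obasis 6) (y)))"
proof -
  have e: "lm (obasis 1) (lm (obasis 3) (lm (obasis 4) (lm (obasis 7) (y)))) = lm (obasis 1) (lm (obasis 3) (lm (obasis 4) (lm (obasis 7) ((- lm (obasis 1) (lm (obasis 2) (lm (obasis 3) (lm (obasis 4) (lm (obasis 5) (lm (obasis 6) (lm (obasis 7) (y))))))))))))" using omega[of y] by (simp add: lin)
  show ?thesis by (subst e) (simp only: lin LL; norm)
qed

lemma Q_1356: "lm (obasis 1) (lm (obasis 3) (lm (obasis 5) (lm (obasis 6) (y)))) = lm (obasis 2) (lm (obasis 4) (lm (obasis 7) (y)))"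
proof -
  have e: "lm (obasis 1) (lm (obasis 3) (lm (obasis 5) (lm (obasis 6) (y)))) = lm (obasis 1) (lm (obasis 3) (lm (obasis 5) (lm (obasis 6) ((- lm (obasis 1) (lm (obasis 2) (lm (obasis 3) (lm (obasis 4) (lm (obasis 5) (lm (obasis 6) (lm (obasis 7) (y))))))))))))" using omega[of y] by (simp add: lin)
  show ?thesis by (subst e) (simp only: lin LL; norm)
qed

lemma Q_1357: "lm (obasis 1) (lm (obasis 3) (lm (obasis 5) (lm (obasis 7) (y)))) = - lm (obasis 2) (lm (obasis 4) (lm (obasis 6) (y)))"
proof -
  have e: "lm (obasis 1) (lm (obasis 3) (lm (obasis 5) (lm (obasis 7) (y)))) = lm (obasis 1) (lm (obasis 3) (lm (obasis 5) (lm (obasis 7) ((- lm (obasis 1) (lm (obasis 2) (lm (obasis 3) (lm (obasis 4) (lm (obasis 5) (lm (obasis 6) (lm (obasis 7) (y))))))))))))" using omega[of y] by (simp add: lin)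
  show ?thesis by (subst e) (simp only: lin LL; norm)
qed

lemma Q_1367: "lm (obasis 1) (lm (obasis 3) (lm (obasis 6) (lm (obasis 7) (y)))) = lm (obasis 2) (lm (obasis 4) (lm (obasis 5) (y)))"
proof -
  have e: "lm (obasis 1) (lm (obasis 3) (lm (obasis 6) (lm (obasis 7) (y)))) = lm (obasis 1) (lm (obasis 3) (lm (obasis 6) (lm (obasis 7) ((- lm (obasis 1) (lm (obasis 2) (lm (obasis 3) (lm (obasis 4) (lm (obasis 5) (lm (obasis 6) (lm (obasis 7) (y))))))))))))" using omega[of y] by (simp add: lin)
  show ?thesis by (subst e) (simp only: lin LL; norm)
qed

lemma Q_1456: "lm (obasis 1) (lm (obasis 4) (lm (obasis 5) (lm (obasis 6) (y)))) = - lm (obasis 2) (lm (obasis 3) (lm (obasis 7) (y)))"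
proof -
  have e: "lm (obasis 1) (lm (obasis 4) (lm (obasis 5) (lm (obasis 6) (y)))) = lm (obasis 1) (lm (obasis 4) (lm (obasis 5) (lm (obasis 6) ((- lm (obasis 1) (lm (obasis 2) (lm (obasis 3) (lm (obasis 4) (lm (obasis 5) (lm (obasis 6) (lm (obasis 7) (y))))))))))))" using omega[of y] by (simp add: lin)
  show ?thesis by (subst e) (simp only: lin LL; norm)
qed

lemma Q_1457: "lm (obasis 1) (lm (obasis 4) (lm (obasis 5) (lm (obasis 7) (y)))) = lm (obasis 2) (lm (obasis 3) (lm (obasis 6) (y)))"
proof -
  have e: "lm (obasis 1) (lm (obasis 4) (lm (obasis 5) (lm (obasis 7) (y)))) = lm (obasis 1) (lm (obasis 4) (lm (obasis 5) (lm (obasis 7) ((- lm (obasis 1) (lm (obasis 2) (lm (obasis 3) (lm (obasis 4) (lm (obasis 5) (lm (obasis 6) (lm (obasis 7) (y))))))))))))" using omega[of y] by (simp add: lin)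
  show ?thesis by (subst e) (simp only: lin LL; norm)
qed

lemma Q_1467: "lm (obasis 1) (lm (obasis 4) (lm (obasis 6) (lm (obasis 7) (y)))) = - lm (obasis 2) (lm (obasis 3) (lm (obasis 5) (y)))"
proof -
  have e: "lm (obasis 1) (lm (obasis 4) (lm (obasis 6) (lm (obasis 7) (y)))) = lm (obasis 1) (lm (obasis 4) (lm (obasis 6) (lm (obasis 7) ((- lm (obasis 1) (lm (obasis 2) (lm (obasis 3) (lm (obasis 4) (lm (obasis 5) (lm (obasis 6) (lm (obasis 7) (y))))))))))))" using omega[of y] by (simp add: lin)
  show ?thesis by (subst e) (simp only: lin LL; norm)
qed

lemma Q_1567: "lm (obasis 1) (lm (obasis 5) (lm (obasis 6) (lm (obasis 7) (y)))) = lm (obasis 2) (lm (obasis 3) (lm (obasis 4) (y)))"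
proof -
  have e: "lm (obasis 1) (lm (obasis 5) (lm (obasis 6) (lm (obasis 7) (y)))) = lm (obasis 1) (lm (obasis 5) (lm (obasis 6) (lm (obasis 7) ((- lm (obasis 1) (lm (obasis 2) (lm (obasis 3) (lm (obasis 4) (lm (obasis 5) (lm (obasis 6) (lm (obasis 7) (y))))))))))))" using omega[of y] by (simp add: lin)
  show ?thesis by (subst e) (simp only: lin LL; norm)
qed

lemma Q_2345: "lm (obasis 2) (lm (obasis 3) (lm (obasis 4) (lm (obasis 5) (y)))) = - lm (obasis 1) (lm (obasis 6) (lm (obasis 7) (y)))"
proof -
  have e: "lm (obasis 2) (lm (obasis 3) (lm (obasis 4) (lm (obasis 5) (y)))) = lm (obasis 2) (lm (obasis 3) (lm (obasis 4) (lm (obasis 5) ((- lm (obasis 1) (lm (obasis 2) (lm (obasis 3) (lm (obasis 4) (lm (obasis 5) (lm (obasis 6) (lm (obasis 7) (y))))))))))))" using omega[of y] by (simp add: lin)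
  show ?thesis by (subst e) (simp only: lin LL; norm)
qed

lemma Q_2346: "lm (obasis 2) (lm (obasis 3) (lm (obasis 4) (lm (obasis 6) (y)))) = lm (obasis 1) (lm (obasis 5) (lm (obasis 7) (y)))"
proof -
  have e: "lm (obasis 2) (lm (obasis 3) (lm (obasis 4) (lm (obasis 6) (y)))) = lm (obasis 2) (lm (obasis 3) (lm (obasis 4) (lm (obasis 6) ((- lm (obasis 1) (lm (obasis 2) (lm (obasis 3) (lm (obasis 4) (lm (obasis 5) (lm (obasis 6) (lm (obasis 7) (y))))))))))))" using omega[of y] by (simp add: lin)
  show ?thesis by (subst e) (simp only: lin LL; norm)
qed

lemma Q_2347: "lm (obasis 2) (lm (obasis 3) (lm (obasis 4) (lm (obasis 7) (y)))) = - lm (obasis 1) (lm (obasis 5) (lm (obasis 6) (y)))"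
proof -
  have e: "lm (obasis 2) (lm (obasis 3) (lm (obasis 4) (lm (obasis 7) (y)))) = lm (obasis 2) (lm (obasis 3) (lm (obasis 4) (lm (obasis 7) ((- lm (obasis 1) (lm (obasis 2) (lm (obasis 3) (lm (obasis 4) (lm (obasis 5) (lm (obasis 6) (lm (obasis 7) (y))))))))))))" using omega[of y] by (simp add: lin)
  show ?thesis by (subst e) (simp only: lin LL; norm)
qed

lemma Q_2356: "lm (obasis 2) (lm (obasis 3) (lm (obasis 5) (lm (obasis 6) (y)))) = - lm (obasis 1) (lm (obasis 4) (lm (obasis 7) (y)))"
proof -
  have e: "lm (obasis 2) (lm (obasis 3) (lm (obasis 5) (lm (obasis 6) (y)))) = lm (obasis 2) (lm (obasis 3) (lm (obasis 5) (lm (obasis 6) ((- lm (obasis 1) (lm (obasis 2) (lm (obasis 3) (lm (obasis 4) (lm (obasis 5) (lm (obasis 6) (lm (obasis 7) (y))))))))))))" using omega[of y] by (simp add: lin)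
  show ?thesis by (subst e) (simp only: lin LL; norm)
qed

lemma Q_2357: "lm (obasis 2) (lm (obasis 3) (lm (obasis 5) (lm (obasis 7) (y)))) = lm (obasis 1) (lm (obasis 4) (lm (obasis 6) (y)))"
proof -
  have e: "lm (obasis 2) (lm (obasis 3) (lm (obasis 5) (lm (obasis 7) (y)))) = lm (obasis 2) (lm (obasis 3) (lm (obasis 5) (lm (obasis 7) ((- lm (obasis 1) (lm (obasis 2) (lm (obasis 3) (lm (obasis 4) (lm (obasis 5) (lm (obasis 6) (lm (obasis 7) (y))))))))))))" using omega[of y] by (simp add: lin)
  show ?thesis by (subst e) (simp only: lin LL; norm)
qed

lemma Q_2367: "lm (obasis 2) (lm (obasis 3) (lm (obasis 6) (lm (obasis 7) (y)))) = - lm (obasis 1) (lm (obasis 4) (lm (obasis 5) (y)))"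
proof -
  have e: "lm (obasis 2) (lm (obasis 3) (lm (obasis 6) (lm (obasis 7) (y)))) = lm (obasis 2) (lm (obasis 3) (lm (obasis 6) (lm (obasis 7) ((- lm (obasis 1) (lm (obasis 2) (lm (obasis 3) (lm (obasis 4) (lm (obasis 5) (lm (obasis 6) (lm (obasis 7) (y))))))))))))" using omega[of y] by (simp add: lin)
  show ?thesis by (subst e) (simp only: lin LL; norm)
qed

lemma Q_2456: "lm (obasis 2) (lm (obasis 4) (lm (obasis 5) (lm (obasis 6) (y)))) = lm (obasis 1) (lm (obasis 3) (lm (obasis 7) (y)))"
proof -
  have e: "lm (obasis 2) (lm (obasis 4) (lm (obasis 5) (lm (obasis 6) (y)))) = lm (obasis 2) (lm (obasis 4) (lm (obasis 5) (lm (obasis 6) ((- lm (obasis 1) (lm (obasis 2) (lm (obasis 3) (lm (obasis 4) (lm (obasis 5) (lm (obasis 6) (lm (obasis 7) (y))))))))))))" using omega[of y] by (simp add: lin)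
  show ?thesis by (subst e) (simp only: lin LL; norm)
qed

lemma Q_2457: "lm (obasis 2) (lm (obasis 4) (lm (obasis 5) (lm (obasis 7) (y)))) = - lm (obasis 1) (lm (obasis 3) (lm (obasis 6) (y)))"
proof -
  have e: "lm (obasis 2) (lm (obasis 4) (lm (obasis 5) (lm (obasis 7) (y)))) = lm (obasis 2) (lm (obasis 4) (lm (obasis 5) (lm (obasis 7) ((- lm (obasis 1) (lm (obasis 2) (lm (obasis 3) (lm (obasis 4) (lm (obasis 5) (lm (obasis 6) (lm (obasis 7) (y))))))))))))" using omega[of y] by (simp add: lin)
  show ?thesis by (subst e) (simp only: lin LL; norm)
qed

lemma Q_2467: "lm (obasis 2) (lm (obasis 4) (lm (obasis 6) (lm (obasis 7) (y)))) = lm (obasis 1) (lm (obasis 3) (lm (obasis 5) (y)))"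
proof -
  have e: "lm (obasis 2) (lm (obasis 4) (lm (obasis 6) (lm (obasis 7) (y)))) = lm (obasis 2) (lm (obasis 4) (lm (obasis 6) (lm (obasis 7) ((- lm (obasis 1) (lm (obasis 2) (lm (obasis 3) (lm (obasis 4) (lm (obasis 5) (lm (obasis 6) (lm (obasis 7) (y))))))))))))" using omega[of y] by (simp add: lin)
  show ?thesis by (subst e) (simp only: lin LL; norm)
qed

lemma Q_2567: "lm (obasis 2) (lm (obasis 5) (lm (obasis 6) (lm (obasis 7) (y)))) = - lm (obasis 1) (lm (obasis 3) (lm (obasis 4) (y)))"
proof -
  have e: "lm (obasis 2) (lm (obasis 5) (lm (obasis 6) (lm (obasis 7) (y)))) = lm (obasis 2) (lm (obasis 5) (lm (obasis 6) (lm (obasis 7) ((- lm (obasis 1) (lm (obasis 2) (lm (obasis 3) (lm (obasis 4) (lm (obasis 5) (lm (obasis 6) (lm (obasis 7) (y))))))))))))" using omega[of y] by (simp add: lin)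
  show ?thesis by (subst e) (simp only: lin LL; norm)
qed

lemma Q_3456: "lm (obasis 3) (lm (obasis 4) (lm (obasis 5) (lm (obasis 6) (y)))) = - lm (obasis 1) (lm (obasis 2) (lm (obasis 7) (y)))"
proof -
  have e: "lm (obasis 3) (lm (obasis 4) (lm (obasis 5) (lm (obasis 6) (y)))) = lm (obasis 3) (lm (obasis 4) (lm (obasis 5) (lm (obasis 6) ((- lm (obasis 1) (lm (obasis 2) (lm (obasis 3) (lm (obasis 4) (lm (obasis 5) (lm (obasis 6) (lm (obasis 7) (y))))))))))))" using omega[of y] by (simp add: lin)
  show ?thesis by (subst e) (simp only: lin LL; norm)
qed

lemma Q_3457: "lm (obasis 3) (lm (obasis 4) (lm (obasis 5) (lm (obasis 7) (y)))) = lm (obasis 1) (lm (obasis 2) (lm (obasis 6) (y)))"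
proof -
  have e: "lm (obasis 3) (lm (obasis 4) (lm (obasis 5) (lm (obasis 7) (y)))) = lm (obasis 3) (lm (obasis 4) (lm (obasis 5) (lm (obasis 7) ((- lm (obasis 1) (lm (obasis 2) (lm (obasis 3) (lm (obasis 4) (lm (obasis 5) (lm (obasis 6) (lm (obasis 7) (y))))))))))))" using omega[of y] by (simp add: lin)
  show ?thesis by (subst e) (simp only: lin LL; norm)
qed

lemma Q_3467: "lm (obasis 3) (lm (obasis 4) (lm (obasis 6) (lm (obasis 7) (y)))) = - lm (obasis 1) (lm (obasis 2) (lm (obasis 5) (y)))"
proof -
  have e: "lm (obasis 3) (lm (obasis 4) (lm (obasis 6) (lm (obasis 7) (y)))) = lm (obasis 3) (lm (obasis 4) (lm (obasis 6) (lm (obasis 7) ((- lm (obasis 1) (lm (obasis 2) (lm (obasis 3) (lm (obasis 4) (lm (obasis 5) (lm (obasis 6) (lm (obasis 7) (y))))))))))))" using omega[of y] by (simp add: lin)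
  show ?thesis by (subst e) (simp only: lin LL; norm)
qed

lemma Q_3567: "lm (obasis 3) (lm (obasis 5) (lm (obasis 6) (lm (obasis 7) (y)))) = lm (obasis 1) (lm (obasis 2) (lm (obasis 4) (y)))"
proof -
  have e: "lm (obasis 3) (lm (obasis 5) (lm (obasis 6) (lm (obasis 7) (y)))) = lm (obasis 3) (lm (obasis 5) (lm (obasis 6) (lm (obasis 7) ((- lm (obasis 1) (lm (obasis 2) (lm (obasis 3) (lm (obasis 4) (lm (obasis 5) (lm (obasis 6) (lm (obasis 7) (y))))))))))))" using omega[of y] by (simp add: lin)
  show ?thesis by (subst e) (simp only: lin LL; norm)
qed

lemma Q_4567: "lm (obasis 4) (lm (obasis 5) (lm (obasis 6) (lm (obasis 7) (y)))) = - lm (obasis 1) (lm (obasis 2) (lm (obasis 3) (y)))"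
proof -
  have e: "lm (obasis 4) (lm (obasis 5) (lm (obasis 6) (lm (obasis 7) (y)))) = lm (obasis 4) (lm (obasis 5) (lm (obasis 6) (lm (obasis 7) ((- lm (obasis 1) (lm (obasis 2) (lm (obasis 3) (lm (obasis 4) (lm (obasis 5) (lm (obasis 6) (lm (obasis 7) (y))))))))))))" using omega[of y] by (simp add: lin)
  show ?thesis by (subst e) (simp only: lin LL; norm)
qed

lemmas QQ = Q_1234 Q_1235 Q_1236 Q_1237 Q_1245 Q_1246 Q_1247 Q_1256 Q_1257 Q_1267 Q_1345 Q_1346 Q_1347 Q_1356 Q_1357 Q_1367 Q_1456 Q_1457 Q_1467 Q_1567 Q_2345 Q_2346 Q_2347 Q_2356 Q_2357 Q_2367 Q_2456 Q_2457 Q_2467 Q_2567 Q_3456 Q_3457 Q_3467 Q_3567 Q_4567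


lemma lm_sum: "lm p (\<Sum>i\<in>A. f i) = (\<Sum>i\<in>A. lm p (f i))" by (rule real_vector.linear_sum[OF linL])
lemma lm_sumL: "lm (\<Sum>i\<in>A. f i) x = (\<Sum>i\<in>A. lm (f i) x)"
  using real_vector.linear_sum[OF linL1[of x], of f A] by simp
lemma rm_sum: "rm (\<Sum>i\<in>A. f i) p = (\<Sum>i\<in>A. rm (f i) p)"
  using real_vector.linear_sum[OF linR[of p], of f A] by simp
lemma rm_sumR: "rm x (\<Sum>i\<in>A. f i) = (\<Sum>i\<in>A. rm x (f i))" by (rule real_vector.linear_sum[OF linR1])

lemma ReM_lr: "m \<in> ReM lm rm \<Longrightarrow> lm p m = rm m p" unfolding ReM_def by blast
lemma ReM_LL: assumes "m \<in> ReM lm rm" shows "lm p (lm q m) = lm (omult p q) m"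
proof -
  have "assocL lm p q m = 0" using assms unfolding ReM_def by blast
  then show ?thesis by (simp add: assocL_def)
qed
lemma ReM_rr: assumes "m \<in> ReM lm rm" shows "rm (rm m p) q = rm m (omult p q)"
proof -
  have "assocR rm m p q = - assocL lm q p m" using ax[of p q m] by blast
  moreover have "assocL lm q p m = 0" using assms unfolding ReM_def by blast
  ultimately show ?thesis by (simp add: assocR_def)
qed
lemma ReM_rmlm: assumes "r \<in> ReM lm rm" shows "rm (lm a r) p = lm (omult a p) r"
proof -
  have "assocL lm p a r = assocM lm rm a r p" using ax[of p a r] by blast
  moreover have "assocL lm p a r = 0" using assms unfolding ReM_def by blast
  ultimately have "assocM lm rm a r p = 0" by simp
  then have "rm (lm a r) p = lm a (rm r p)" unfolding assocM_def by simp
  also have "\<dots> = lm a (lm p r)" using ReM_lr[OF assms] by simp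
  also have "\<dots> = lm (omult a p) r" using ReM_LL[OF assms] by simp
  finally show ?thesis .
qed

lemma three_zero: "(x::'a::real_vector) = - x - x \<Longrightarrow> x = 0"
proof -
  assume h: "x = - x - x"
  have "(1 + 1 + 1 :: real) *\<^sub>R x = x + x + x" by (simp only: scaleR_add_left scaleR_one)
  also have "\<dots> = x - (- x - x)" by (simp add: algebra_simps)
  also have "\<dots> = 0" using h by simp
  finally show "x = 0" by simp
qed

lemma ReM_I: assumes h: "\<And>j. j < 8 \<Longrightarrow> lm (obasis j) m = rm m (obasis j)" shows "m \<in> ReM lm rm"
proof -
  have c: "lm p m = rm m p" for p
  proof -
    have "lm p m = lm (\<Sum>i<8. oc p i *\<^sub>R obasis i) m" by (rule arg_cong[where f="\<lambda>p. lm p m"], rule oexp)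
    also have "\<dots> = (\<Sum>i<8. oc p i *\<^sub>R lm (obasis i) m)" by (simp add: lm_sumL lm_scaleL)
    also have "\<dots> = (\<Sum>i<8. oc p i *\<^sub>R rm m (obasis i))" by (rule sum.cong) (simp_all add: h)
    also have "\<dots> = rm m (\<Sum>i<8. oc p i *\<^sub>R obasis i)" by (simp add: rm_sumR rm_scaleR)
    also have "\<dots> = rm m p" using oexp[of p, symmetric] by simp
    finally show ?thesis .
  qed
  have a: "assocL lm p q m = 0" for p q
  proof -
    have e1: "assocR rm m q p = - assocL lm p q m" using ax[of q p m] by blast
    have e2: "assocL lm q p m = - assocL lm p q m" by (rule assocL_anti)
    have "assocL lm p q m = assocM lm rm q m p" using ax[of p q m] by blast
    also have "\<dots> = rm (rm m q) p - lm q (lm p m)" unfolding assocM_def c[of q] c[of p] ..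
    also have "\<dots> = assocR rm m q p + assocL lm q p m" unfolding assocR_def assocL_def c[of "omult q p"] by simp
    also have "\<dots> = - assocL lm p q m - assocL lm p q m" unfolding e1 e2 by simp
    finally show ?thesis by (rule three_zero)
  qed
  show ?thesis unfolding ReM_def using a c by simp
qed


definition P where "P y = (1/8) *\<^sub>R (y + (-1) *\<^sub>R lm (obasis 1) (lm (obasis 2) (lm (obasis 3) (y))) + (-1) *\<^sub>R lm (obasis 1) (lm (obasis 4) (lm (obasis 5) (y))) + (1) *\<^sub>R lm (obasis 1) (lm (obasis 6) (lm (obasis 7) (y))) + (-1) *\<^sub>R lm (obasis 2) (lm (obasis 4) (lm (obasis 6) (y))) + (-1) *\<^sub>R lm (obasis 2) (lm (obasis 5) (lm (obasis 7) (y))) + (-1) *\<^sub>R lm (obasis 3) (lm (obasis 4) (lm (obasis 7) (y))) + (1) *\<^sub>R lm (obasis 3) (lm (obasis 5) (lm (obasis 6) (y))))"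

lemma T1_1: "lm (obasis 1) (P y) = rm (P y) (obasis 1)"
  unfolding P_def by (simp only: Rrules lin LL QQ; norm)

lemma T1_2: "lm (obasis 2) (P y) = rm (P y) (obasis 2)"
  unfolding P_def by (simp only: Rrules lin LL QQ; norm)

lemma T1_3: "lm (obasis 3) (P y) = rm (P y) (obasis 3)"
  unfolding P_def by (simp only: Rrules lin LL QQ; norm)

lemma T1_4: "lm (obasis 4) (P y) = rm (P y) (obasis 4)"
  unfolding P_def by (simp only: Rrules lin LL QQ; norm)

lemma T1_5: "lm (obasis 5) (P y) = rm (P y) (obasis 5)"
  unfolding P_def by (simp only: Rrules lin LL QQ; norm)

lemma T1_6: "lm (obasis 6) (P y) = rm (P y) (obasis 6)"
  unfolding P_def by (simp only: Rrules lin LL QQ; norm)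

lemma T1_7: "lm (obasis 7) (P y) = rm (P y) (obasis 7)"
  unfolding P_def by (simp only: Rrules lin LL QQ; norm)

lemma recon: "y = P y - (lm (obasis 1) (P (lm (obasis 1) y)) + lm (obasis 2) (P (lm (obasis 2) y)) + lm (obasis 3) (P (lm (obasis 3) y)) + lm (obasis 4) (P (lm (obasis 4) y)) + lm (obasis 5) (P (lm (obasis 5) y)) + lm (obasis 6) (P (lm (obasis 6) y)) + lm (obasis 7) (P (lm (obasis 7) y)))"
  unfolding P_def by (simp only: lin LL QQ; norm)

lemma P_Lr_0: assumes "r \<in> ReM lm rm" shows "P (lm (obasis 0) r) = r"
  unfolding P_def by (simp only: ReM_LL[OF assms] otab lin; ((simp add: algebra_simps; fail) | norm))

lemma P_Lr_1: assumes "r \<in> ReM lm rm" shows "P (lm (obasis 1) r) = 0"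
  unfolding P_def by (simp only: ReM_LL[OF assms] otab lin; ((simp add: algebra_simps; fail) | norm))

lemma P_Lr_2: assumes "r \<in> ReM lm rm" shows "P (lm (obasis 2) r) = 0"
  unfolding P_def by (simp only: ReM_LL[OF assms] otab lin; ((simp add: algebra_simps; fail) | norm))

lemma P_Lr_3: assumes "r \<in> ReM lm rm" shows "P (lm (obasis 3) r) = 0"
  unfolding P_def by (simp only: ReM_LL[OF assms] otab lin; ((simp add: algebra_simps; fail) | norm))

lemma P_Lr_4: assumes "r \<in> ReM lm rm" shows "P (lm (obasis 4) r) = 0"
  unfolding P_def by (simp only: ReM_LL[OF assms] otab lin; ((simp add: algebra_simps; fail) | norm))

lemma P_Lr_5: assumes "r \<in> ReM lm rm" shows "P (lm (obasis 5) r) = 0"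
  unfolding P_def by (simp only: ReM_LL[OF assms] otab lin; ((simp add: algebra_simps; fail) | norm))

lemma P_Lr_6: assumes "r \<in> ReM lm rm" shows "P (lm (obasis 6) r) = 0"
  unfolding P_def by (simp only: ReM_LL[OF assms] otab lin; ((simp add: algebra_simps; fail) | norm))

lemma P_Lr_7: assumes "r \<in> ReM lm rm" shows "P (lm (obasis 7) r) = 0"
  unfolding P_def by (simp only: ReM_LL[OF assms] otab lin; ((simp add: algebra_simps; fail) | norm))


lemma P_add: "P (x + y) = P x + P y" unfolding P_def by (simp only: lin; norm)
lemma P_scale: "P (c *\<^sub>R x) = c *\<^sub>R P x" unfolding P_def by (simp add: lin algebra_simps)
lemma P_linear: "linear P" by (rule linearI) (simp_all add: P_add P_scale)
lemma P_minus: "P (- x) = - P x" by (rule real_vector.linear_neg[OF P_linear])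
lemma P_diff: "P (x - y) = P x - P y" by (rule real_vector.linear_diff[OF P_linear])
lemma P_zero: "P 0 = 0" by (rule real_vector.linear_0[OF P_linear])
lemma P_sum: "P (\<Sum>i\<in>A. f i) = (\<Sum>i\<in>A. P (f i))" by (rule real_vector.linear_sum[OF P_linear])

lemma P_ReM: "P y \<in> ReM lm rm"
proof (rule ReM_I)
  fix j :: nat assume "j < 8"
  then have "j = 0 \<or> j = 1 \<or> j = 2 \<or> j = 3 \<or> j = 4 \<or> j = 5 \<or> j = 6 \<or> j = 7" by arith
  then show "lm (obasis j) (P y) = rm (P y) (obasis j)"
    by (elim disjE) (simp_all only: lm_ob0 rm_ob0 T1_1 T1_2 T1_3 T1_4 T1_5 T1_6 T1_7)
qed

lemma ocnj_ob: "ocnj (obasis 0) = obasis 0" "ocnj (obasis 1) = - obasis 1" "ocnj (obasis 2) = - obasis 2"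
  "ocnj (obasis 3) = - obasis 3" "ocnj (obasis 4) = - obasis 4" "ocnj (obasis 5) = - obasis 5"
  "ocnj (obasis 6) = - obasis 6" "ocnj (obasis 7) = - obasis 7"
  by (simp_all add: obasis_omk ocnj_omk omk_minus)

definition comp where "comp x i = P (lm (ocnj (obasis i)) x)"

lemma comp_ReM: "comp x i \<in> ReM lm rm" by (simp add: comp_def P_ReM)

lemma decomp: "x = (\<Sum>i<8. lm (obasis i) (comp x i))"
proof -
  have "(\<Sum>i<8. lm (obasis i) (comp x i)) = P x - (lm (obasis 1) (P (lm (obasis 1) x)) + lm (obasis 2) (P (lm (obasis 2) x)) + lm (obasis 3) (P (lm (obasis 3) x)) + lm (obasis 4) (P (lm (obasis 4) x)) + lm (obasis 5) (P (lm (obasis 5) x)) + lm (obasis 6) (P (lm (obasis 6) x)) + lm (obasis 7) (P (lm (obasis 7) x)))"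
    unfolding sum8 comp_def ocnj_ob by (simp only: lin P_minus; norm)
  with recon[of x] show ?thesis by simp
qed

lemma P_lm_ReM: assumes "r \<in> ReM lm rm" shows "P (lm a r) = ore a *\<^sub>R r"
proof -
  have "lm a r = lm (\<Sum>i<8. oc a i *\<^sub>R obasis i) r" by (rule arg_cong[where f="\<lambda>p. lm p r"], rule oexp)
  also have "\<dots> = (\<Sum>i<8. oc a i *\<^sub>R lm (obasis i) r)" by (simp add: lm_sumL lm_scaleL)
  finally have "P (lm a r) = (\<Sum>i<8. oc a i *\<^sub>R P (lm (obasis i) r))" by (simp add: P_sum P_scale)
  also have "\<dots> = ore a *\<^sub>R r"
    unfolding sum8 P_Lr_0[OF assms] P_Lr_1[OF assms] P_Lr_2[OF assms] P_Lr_3[OF assms]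
      P_Lr_4[OF assms] P_Lr_5[OF assms] P_Lr_6[OF assms] P_Lr_7[OF assms] by (simp add: oc0)
  finally show ?thesis .
qed

lemma uniq: assumes h: "\<forall>i<8. xs i \<in> ReM lm rm" and x: "x = (\<Sum>i<8. lm (obasis i) (xs i))" and k: "k < 8"
  shows "comp x k = xs k"
proof -
  have "comp x k = (\<Sum>i<8. P (lm (ocnj (obasis k)) (lm (obasis i) (xs i))))"
    unfolding comp_def x by (simp add: lm_sum P_sum)
  also have "\<dots> = (\<Sum>i<8. (if k = i then xs i else 0))"
  proof (rule sum.cong)
    fix i assume "i \<in> {..<8::nat}"
    then have i: "i < 8" by simp
    have "P (lm (ocnj (obasis k)) (lm (obasis i) (xs i))) = P (lm (omult (ocnj (obasis k)) (obasis i)) (xs i))"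
      using ReM_LL h i by simp
    also have "\<dots> = ore (omult (ocnj (obasis k)) (obasis i)) *\<^sub>R xs i" using P_lm_ReM h i by simp
    also have "\<dots> = (if k = i then xs i else 0)" using ore_cnj_basis[OF k i] by simp
    finally show "P (lm (ocnj (obasis k)) (lm (obasis i) (xs i))) = (if k = i then xs i else 0)" .
  qed simp
  also have "\<dots> = xs k" using k by (simp add: sum.delta)
  finally show ?thesis .
qed

lemma odecomp_eq: "odecomp lm rm x = (\<lambda>i. if i < 8 then comp x i else 0)"
  unfolding odecomp_def
proof (rule the_equality)
  show "(\<forall>i<8. (if i < 8 then comp x i else 0) \<in> ReM lm rm) \<and> (\<forall>i\<ge>8. (if i < 8 then comp x i else 0) = 0) \<and>
    x = (\<Sum>i<8. lm (obasis i) (if i < 8 then comp x i else 0))"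
    using comp_ReM decomp[of x] by simp
next
  fix xs assume a: "(\<forall>i<8. xs i \<in> ReM lm rm) \<and> (\<forall>i\<ge>8. xs i = 0) \<and> x = (\<Sum>i<8. lm (obasis i) (xs i))"
  show "xs = (\<lambda>i. if i < 8 then comp x i else 0)"
  proof
    fix i show "xs i = (if i < 8 then comp x i else 0)"
      using a uniq[of xs x i] by (cases "i < 8") auto
  qed
qed

lemma ReV_eq: "ReV lm rm x = P x" by (simp add: ReV_def odecomp_eq comp_def ocnj_ob lm_ob0)

lemma P_assocR: "P (rm (rm y p) q - rm y (omult p q)) = 0"
proof -
  have "rm (rm y p) q = (\<Sum>i<8. lm (omult (omult (obasis i) p) q) (comp y i))"
    apply (subst decomp[of y]) by (simp add: rm_sum ReM_rmlm comp_ReM)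
  moreover have "rm y (omult p q) = (\<Sum>i<8. lm (omult (obasis i) (omult p q)) (comp y i))"
    apply (subst decomp[of y]) by (simp add: rm_sum ReM_rmlm comp_ReM)
  ultimately have "P (rm (rm y p) q - rm y (omult p q)) =
     (\<Sum>i<8. (ore (omult (omult (obasis i) p) q) - ore (omult (obasis i) (omult p q))) *\<^sub>R comp y i)"
    by (simp add: P_diff P_sum P_lm_ReM comp_ReM sum_subtractf scaleR_diff_left)
  also have "\<dots> = 0" by (simp add: ore_assoc)
  finally show ?thesis .
qed

lemma P_comm: "P (lm p y) = P (rm y p)"
proof -
  have "lm p y = (\<Sum>i<8. lm (omult p (obasis i)) (comp y i))"
    apply (subst decomp[of y]) by (simp add: lm_sum ReM_LL comp_ReM)
  moreover have "rm y p = (\<Sum>i<8. lm (omult (obasis i) p) (comp y i))"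
    apply (subst decomp[of y]) by (simp add: rm_sum ReM_rmlm comp_ReM)
  ultimately have "P (lm p y) - P (rm y p) =
     (\<Sum>i<8. (ore (omult p (obasis i)) - ore (omult (obasis i) p)) *\<^sub>R comp y i)"
    by (simp add: P_diff[symmetric] P_sum P_lm_ReM comp_ReM sum_subtractf scaleR_diff_left)
  also have "\<dots> = 0" by (simp add: ore_comm)
  finally show ?thesis by simp
qed

lemma P_assocM: "P (rm (lm p y) q - lm p (rm y q)) = 0"
proof -
  have "assocL lm q p y = assocM lm rm p y q" using ax[of q p y] by simp
  moreover have "assocR rm y p q = - assocL lm q p y" using ax[of p q y] by simp
  ultimately have "rm (lm p y) q - lm p (rm y q) = - (rm (rm y p) q - rm y (omult p q))"
    by (simp add: assocM_def assocR_def)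
  then show ?thesis using P_assocR[of y p q] by (simp add: P_minus P_diff)
qed

lemma recR: "u = (\<Sum>i<8. rm (P (rm u (ocnj (obasis i)))) (obasis i))"
proof -
  have "u = (\<Sum>i<8. lm (obasis i) (comp u i))" by (rule decomp)
  also have "\<dots> = (\<Sum>i<8. rm (P (rm u (ocnj (obasis i)))) (obasis i))"
    by (rule sum.cong) (simp_all add: comp_def P_comm ReM_lr P_ReM)
  finally show ?thesis .
qed

lemma eq_by_P: assumes "\<And>i. i < 8 \<Longrightarrow> P (rm u (ocnj (obasis i))) = P (rm v (ocnj (obasis i)))"
  shows "u = v"
  by (subst recR[of u], subst recR[of v]) (rule sum.cong, simp_all add: assms)


lemma rr_span: assumes "insp s a" "insp s b" shows "rm (rm x a) b = rm x (omult a b)"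
proof -
  obtain a1 a2 where a: "a = a1 *\<^sub>R oone + a2 *\<^sub>R s" using assms(1) insp_def by blast
  obtain b1 b2 where b: "b = b1 *\<^sub>R oone + b2 *\<^sub>R s" using assms(2) insp_def by blast
  have sss: "rm (rm x s) s = rm x (omult s s)" by (rule altR)
  show ?thesis unfolding a b
    by (simp add: lin omult_add_left omult_add_right omult_scaleR_left omult_scaleR_right
        omult_oone_left omult_oone_right rm_one sss algebra_simps)
qed

lemma PLa: assumes "right_paralinear lm rm f" shows "P (rm (f x) q) = P (f (rm x q))"
proof -
  have "ReV lm rm (Bp rm q f x) = 0" using assms unfolding right_paralinear_def by blast
  then show ?thesis by (simp add: ReV_eq Bp_def P_diff)
qed

lemma PL_lin: "right_paralinear lm rm f \<Longrightarrow> linear f" unfolding right_paralinear_def by blast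

lemma P_rr: "P (rm (rm y p) q) = P (rm y (omult p q))" using P_assocR[of y p q] by (simp add: P_diff)
lemma P_rl: "P (rm (lm p y) q) = P (lm p (rm y q))" using P_assocM[of p y q] by (simp add: P_diff)

lemma PL1: assumes f: "right_paralinear lm rm f" and r: "r \<in> ReM lm rm" shows "f (rm r p) = rm (f r) p"
proof (rule eq_by_P)
  fix i :: nat assume "i < 8"
  let ?q = "ocnj (obasis i)"
  have "P (rm (f (rm r p)) ?q) = P (f (rm (rm r p) ?q))" by (rule PLa[OF f])
  also have "\<dots> = P (f (rm r (omult p ?q)))" by (simp add: ReM_rr[OF r])
  also have "\<dots> = P (rm (f r) (omult p ?q))" by (rule PLa[OF f, symmetric])
  also have "\<dots> = P (rm (rm (f r) p) ?q)" by (rule P_rr[symmetric])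
  finally show "P (rm (f (rm r p)) ?q) = P (rm (rm (f r) p) ?q)" .
qed

lemma PL2: assumes f: "right_paralinear lm rm f" shows "f x = (\<Sum>i<8. rm (f (comp x i)) (obasis i))"
proof -
  have lf: "linear f" by (rule PL_lin[OF f])
  have "f x = f (\<Sum>i<8. lm (obasis i) (comp x i))" by (rule arg_cong[where f=f], rule decomp)
  also have "\<dots> = f (\<Sum>i<8. rm (comp x i) (obasis i))" by (simp add: ReM_lr comp_ReM)
  also have "\<dots> = (\<Sum>i<8. f (rm (comp x i) (obasis i)))" by (rule real_vector.linear_sum[OF lf])
  also have "\<dots> = (\<Sum>i<8. rm (f (comp x i)) (obasis i))" by (simp add: PL1[OF f] comp_ReM)
  finally show ?thesis .
qed

lemma PL3: assumes f: "right_paralinear lm rm f"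
  shows "f x = (\<Sum>i<8. rm (P (f (rm x (ocnj (obasis i))))) (obasis i))"
  by (subst recR[of "f x"]) (simp add: PLa[OF f])

lemma rs_ReM: assumes f: "right_paralinear lm rm f" and r: "r \<in> ReM lm rm"
  shows "rsmult lm rm f p r = rm (f r) p"
  by (simp add: rsmult_def Bp_def ReM_lr[OF r] PL1[OF f r])

lemma rs_para: assumes f: "right_paralinear lm rm f" shows "right_paralinear lm rm (rsmult lm rm f p)"
proof -
  have lf: "linear f" by (rule PL_lin[OF f])
  note fl = real_vector.linear_add[OF lf] real_vector.linear_diff[OF lf] real_vector.linear_neg[OF lf]
    linear_cmul[OF lf] real_vector.linear_0[OF lf]
  have g: "\<And>x. rsmult lm rm f p x = f (lm p x) - (rm (f x) p - f (rm x p))" by (simp add: rsmult_def Bp_def)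
  have lin_g: "linear (rsmult lm rm f p)"
    by (rule linearI) (simp_all add: g lin fl algebra_simps)
  have "P (Bp rm q (rsmult lm rm f p) x) = 0" for q x
  proof -
    have e1: "assocL lm q p x = assocM lm rm p x q" using ax[of q p x] by blast
    have e2: "assocR rm x p q = - assocL lm q p x" using ax[of p q x] by blast
    have z: "assocM lm rm p x q + assocR rm x p q = 0" using e1 e2 by simp
    have "P (Bp rm q (rsmult lm rm f p) x) = P (f (rm (lm p x) q)) - P (f (rm x (omult p q))) + P (f (rm (rm x p) q)) - P (f (lm p (rm x q)))"
      unfolding Bp_def g by (simp only: lin P_add P_diff P_minus PLa[OF f] P_rr; ((simp add: algebra_simps; fail) | norm))
    also have "\<dots> = P (f (assocM lm rm p x q + assocR rm x p q))"
      unfolding assocM_def assocR_def by (simp only: fl P_add P_diff P_minus; ((simp add: algebra_simps; fail) | norm))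
    also have "\<dots> = 0" using z by (simp add: fl P_zero)
    finally show ?thesis .
  qed
  then show ?thesis unfolding right_paralinear_def using lin_g by (simp add: ReV_eq)
qed

lemma ls_para: assumes f: "right_paralinear lm rm f" shows "right_paralinear lm rm (lsmult lm rm p f)"
proof -
  have lf: "linear f" by (rule PL_lin[OF f])
  note fl = real_vector.linear_add[OF lf] real_vector.linear_diff[OF lf] real_vector.linear_neg[OF lf]
    linear_cmul[OF lf] real_vector.linear_0[OF lf]
  have h: "\<And>x. lsmult lm rm p f x = lm p (f x) + (rm (f x) p - f (rm x p))" by (simp add: lsmult_def Bp_def)
  have lin_h: "linear (lsmult lm rm p f)"
    by (rule linearI) (simp_all add: h lin fl algebra_simps)
  have "P (Bp rm q (lsmult lm rm p f) x) = 0" for q x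
  proof -
    have z: "assocR rm x q p + assocR rm x p q = 0" using assocR_anti[of x q p] by simp
    have "P (Bp rm q (lsmult lm rm p f) x) = P (f (rm x (omult q p))) + P (f (rm x (omult p q))) - P (f (rm (rm x p) q)) - P (f (rm (rm x q) p))"
      unfolding Bp_def h by (simp only: lin P_add P_diff P_minus P_rl P_comm PLa[OF f] P_rr; ((simp add: algebra_simps; fail) | norm))
    also have "\<dots> = - P (f (assocR rm x q p + assocR rm x p q))"
      unfolding assocR_def by (simp only: fl P_add P_diff P_minus; ((simp add: algebra_simps; fail) | norm))
    also have "\<dots> = 0" using z by (simp add: fl P_zero)
    finally show ?thesis .
  qed
  then show ?thesis unfolding right_paralinear_def using lin_h by (simp add: ReV_eq)
qed

end


locale bobim = obim lm rm for lm :: "oct \<Rightarrow> 'v::banach \<Rightarrow> 'v" and rm +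
  assumes nlm: "norm (lm p x) = norm p * norm x" and nrm: "norm (rm x p) = norm p * norm x"
begin

lemma bl_lm: "bounded_linear (lm p)"
  by (rule bounded_linear_intro[where K="norm p"]) (simp_all add: lin nlm mult.commute)
lemma bl_rm: "bounded_linear (\<lambda>x. rm x p)"
  by (rule bounded_linear_intro[where K="norm p"]) (simp_all add: lin nrm mult.commute)

lemma bl_P: "bounded_linear P"
proof -
  have w: "bounded_linear (\<lambda>y. c *\<^sub>R lm (obasis a) (lm (obasis b) (lm (obasis d) y)))" for a b d and c :: real
    by (intro bounded_linear_compose[OF bounded_linear_scaleR_right] bounded_linear_compose[OF bl_lm] bl_lm)
  show ?thesis unfolding P_def[abs_def]
    by (intro bounded_linear_compose[OF bounded_linear_scaleR_right] bounded_linear_add bounded_linear_ident w)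
qed

lemma BRO_para: "f \<in> BRO lm rm \<Longrightarrow> right_paralinear lm rm f" by (simp add: BRO_def)
lemma BRO_bl: "f \<in> BRO lm rm \<Longrightarrow> bounded_linear f" by (simp add: BRO_def)

lemma rs_BRO: assumes "f \<in> BRO lm rm" shows "rsmult lm rm f p \<in> BRO lm rm"
proof -
  have bf: "bounded_linear f" using assms by (simp add: BRO_def)
  have "bounded_linear (\<lambda>x. f (lm p x) - (rm (f x) p - f (rm x p)))"
    by (intro bounded_linear_sub bounded_linear_compose[OF bf] bl_lm
        bounded_linear_compose[OF bl_rm] bf bl_rm)
  moreover have "rsmult lm rm f p = (\<lambda>x. f (lm p x) - (rm (f x) p - f (rm x p)))"
    by (simp add: rsmult_def Bp_def fun_eq_iff)
  ultimately have "bounded_linear (rsmult lm rm f p)" by simp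
  then show ?thesis using rs_para[OF BRO_para[OF assms], of p] by (simp add: BRO_def)
qed

lemma ls_BRO: assumes "f \<in> BRO lm rm" shows "lsmult lm rm p f \<in> BRO lm rm"
proof -
  have bf: "bounded_linear f" using assms by (simp add: BRO_def)
  have "bounded_linear (\<lambda>x. lm p (f x) + (rm (f x) p - f (rm x p)))"
    by (intro bounded_linear_add bounded_linear_sub bounded_linear_compose[OF bl_lm] bf
        bounded_linear_compose[OF bl_rm] bounded_linear_compose[OF bf] bl_rm)
  moreover have "lsmult lm rm p f = (\<lambda>x. lm p (f x) + (rm (f x) p - f (rm x p)))"
    by (simp add: lsmult_def Bp_def fun_eq_iff)
  ultimately have "bounded_linear (lsmult lm rm p f)" by simp
  then show ?thesis using ls_para[OF BRO_para[OF assms], of p] by (simp add: BRO_def)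
qed

lemma limit_para: assumes bF: "bounded_linear F" and v: "\<And>n. right_paralinear lm rm (v n)"
  and s: "\<And>x. (\<lambda>n. v n x) sums F x"
  shows "F \<in> BRO lm rm"
proof -
  have "P (Bp rm p F x) = 0" for p x
  proof -
    have "(\<lambda>n. rm (v n x) p) sums rm (F x) p" by (rule bounded_linear.sums[OF bl_rm s])
    then have "(\<lambda>n. rm (v n x) p - v n (rm x p)) sums (rm (F x) p - F (rm x p))"
      by (rule sums_diff) (rule s)
    then have "(\<lambda>n. P (rm (v n x) p - v n (rm x p))) sums P (rm (F x) p - F (rm x p))"
      by (rule bounded_linear.sums[OF bl_P])
    moreover have "P (rm (v n x) p - v n (rm x p)) = 0" for n
      using PLa[OF v, of n x p] by (simp add: P_diff)
    ultimately have "(\<lambda>n. 0) sums P (rm (F x) p - F (rm x p))" by simp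
    then show ?thesis unfolding Bp_def using sums_zero sums_unique2 by metis
  qed
  then show ?thesis unfolding BRO_def right_paralinear_def
    using bF bounded_linear.linear[OF bF] by (simp add: ReV_eq)
qed

end

locale opthm = bobim lm rm for lm :: "oct \<Rightarrow> 'v::banach \<Rightarrow> 'v" and rm +
  fixes T :: "'v \<Rightarrow> 'v" and s :: oct
  assumes pa: "power_associative lm rm T" and ns: "onorm T < norm s"
begin

lemma TnBRO: "T ^^ n \<in> BRO lm rm" using pa by (simp add: power_associative_def)
lemma TBRO: "T \<in> BRO lm rm" using pa by (simp add: power_associative_def)
lemma blT: "bounded_linear T" using TBRO by (simp add: BRO_def)
lemma paraTn: "right_paralinear lm rm (T ^^ n)" using TnBRO by (simp add: BRO_def)
lemma blTn: "bounded_linear (T ^^ n)" using TnBRO by (simp add: BRO_def)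

definition t where "t = onorm T"
lemma t_ge0: "0 \<le> t" unfolding t_def by (rule onorm_pos_le[OF blT])
lemma s_pos: "0 < norm s" using t_ge0 ns t_def by linarith
lemma s_nz: "s \<noteq> 0" using s_pos by auto

definition q where "q = t / norm s"
lemma q_ge0: "0 \<le> q" unfolding q_def using t_ge0 s_pos by simp
lemma q_lt1: "q < 1" unfolding q_def using ns s_pos t_def by (simp add: divide_less_eq)

lemma normTn: "norm ((T ^^ n) v) \<le> t ^ n * norm v"
proof (induct n)
  case 0 then show ?case by simp
next
  case (Suc n)
  have "norm ((T ^^ Suc n) v) = norm (T ((T ^^ n) v))" by simp
  also have "\<dots> \<le> t * norm ((T ^^ n) v)" unfolding t_def by (rule onorm[OF blT])
  also have "\<dots> \<le> t * (t ^ n * norm v)" by (rule mult_left_mono[OF Suc t_ge0])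
  finally show ?case by (simp add: mult.assoc)
qed

abbreviation pw where "pw n \<equiv> opow (oinv s) n"

lemma norm_pw: "norm (pw n) = (1 / norm s) ^ n" by (simp add: norm_opow norm_oinv)

lemma norm_pw_Tn: "norm (pw n) * norm ((T ^^ n) v) \<le> q ^ n * norm v"
proof -
  have "norm (pw n) * norm ((T ^^ n) v) \<le> (1 / norm s) ^ n * (t ^ n * norm v)"
    by (simp add: norm_pw mult_left_mono normTn)
  also have "\<dots> = q ^ n * norm v" by (simp add: q_def power_divide)
  finally show ?thesis .
qed

definition K where "K v = rm (T v) (oinv s)"
lemma blK: "bounded_linear K" unfolding K_def[abs_def] by (rule bounded_linear_compose[OF bl_rm blT])
lemma blKn: "bounded_linear (K ^^ n)"
  by (induct n) (simp_all add: bounded_linear_ident[unfolded id_def] bounded_linear_compose[OF blK] id_def)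

lemma normKn: "norm ((K ^^ n) v) \<le> q ^ n * norm v"
proof (induct n)
  case 0 then show ?case by simp
next
  case (Suc n)
  have "norm ((K ^^ Suc n) v) = norm (oinv s) * norm (T ((K ^^ n) v))" by (simp add: K_def nrm)
  also have "\<dots> \<le> (1 / norm s) * (t * norm ((K ^^ n) v))"
    by (simp add: norm_oinv t_def onorm[OF blT] divide_right_mono s_pos)
  also have "\<dots> = q * norm ((K ^^ n) v)" by (simp add: q_def)
  also have "\<dots> \<le> q * (q ^ n * norm v)" by (rule mult_left_mono[OF Suc q_ge0])
  finally show ?case by (simp add: mult.assoc)
qed

lemma geo_summable: "summable (\<lambda>n. q ^ n * c)"
  by (rule summable_mult2, rule summable_geometric) (use q_ge0 q_lt1 in simp)

lemma summable_Kn: "summable (\<lambda>n. (K ^^ n) v)"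
  by (rule summable_comparison_test'[OF geo_summable[of "norm v"]]) (rule normKn)

definition N where "N v = (\<Sum>n. (K ^^ n) v)"

lemma N_left: "N v - K (N v) = v"
proof -
  have "K (N v) = (\<Sum>n. K ((K ^^ n) v))" unfolding N_def by (rule bounded_linear.suminf[OF blK summable_Kn])
  also have "\<dots> = (\<Sum>n. (K ^^ Suc n) v)" by simp
  also have "\<dots> = N v - v" unfolding N_def by (subst suminf_split_head[OF summable_Kn]) simp
  finally show ?thesis by simp
qed

lemma N_right: "N (v - K v) = v"
proof -
  have e: "(K ^^ n) (v - K v) = (K ^^ n) v - (K ^^ Suc n) v" for n
    using real_vector.linear_diff[OF bounded_linear.linear[OF blKn[of n]]] funpow_swap1[of K n v] by simp
  have s2: "summable (\<lambda>n. (K ^^ Suc n) v)" using summable_Kn[of v] summable_Suc_iff[of "\<lambda>n. (K ^^ n) v"] by blast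
  have "N (v - K v) = (\<Sum>n. (K ^^ n) v - (K ^^ Suc n) v)" unfolding N_def e ..
  also have "\<dots> = N v - (\<Sum>n. (K ^^ Suc n) v)" unfolding N_def by (rule suminf_diff[OF summable_Kn s2, symmetric])
  also have "\<dots> = v" unfolding N_def by (subst suminf_split_head[OF summable_Kn]) simp
  finally show ?thesis .
qed

lemma blN: "bounded_linear N"
proof (rule bounded_linear_intro[where K="1 / (1 - q)"])
  fix x y show "N (x + y) = N x + N y"
    unfolding N_def using suminf_add[OF summable_Kn[of x] summable_Kn[of y]]
    by (simp add: real_vector.linear_add[OF bounded_linear.linear[OF blKn]])
next
  fix r x show "N (r *\<^sub>R x) = r *\<^sub>R N x"
    unfolding N_def using bounded_linear.suminf[OF bounded_linear_scaleR_right[of r] summable_Kn[of x]]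
    by (simp add: linear_cmul[OF bounded_linear.linear[OF blKn]])
next
  fix x
  have "norm (N x) \<le> (\<Sum>n. q ^ n * norm x)"
    unfolding N_def by (rule norm_suminf_le[OF normKn geo_summable])
  also have "\<dots> = norm x * (1 / (1 - q))"
    using suminf_mult2[OF summable_geometric[of q], of "norm x"] suminf_geometric[of q] q_ge0 q_lt1
    by (simp add: mult.commute)
  finally show "norm (N x) \<le> norm x * (1 / (1 - q))" .
qed

definition S where "S v = rm v s - T v"
definition g where "g y = N (rm y (oinv s))"

lemma rm_s_inv1: "rm (rm y s) (oinv s) = y"
  by (simp add: rr_span[of s, OF insp_s insp_oinv] oinv_mult[OF s_nz] rm_one)
lemma rm_s_inv2: "rm (rm y (oinv s)) s = y"
  by (simp add: rr_span[of s, OF insp_oinv insp_s] oinv_mult[OF s_nz] rm_one)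
lemmas rm_s_inv = rm_s_inv1 rm_s_inv2

lemma S_eq: "S w = rm (w - K w) s" by (simp add: S_def K_def lin rm_s_inv)

lemma gS: "g (S v) = v" unfolding g_def S_def by (simp add: lin rm_s_inv K_def[symmetric] N_right)
lemma Sg: "S (g y) = y" unfolding S_eq g_def N_left by (simp add: rm_s_inv)

lemma blS: "bounded_linear S" unfolding S_def[abs_def] by (rule bounded_linear_sub[OF bl_rm blT])
lemma blg: "bounded_linear g" unfolding g_def[abs_def] by (rule bounded_linear_compose[OF blN bl_rm])

lemma invS: "inv S = g" by (rule inv_unique_comp) (simp_all add: fun_eq_iff gS Sg)

lemma S_inv: "invertible_op S"
  unfolding invertible_op_def using blS blg by (auto simp: fun_eq_iff gS Sg)

lemma Tn_rm: "r \<in> ReM lm rm \<Longrightarrow> (T ^^ n) (rm r p) = rm ((T ^^ n) r) p" by (rule PL1[OF paraTn])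

lemma right_ReM: assumes r: "r \<in> ReM lm rm"
  shows "(\<lambda>n. rsmult lm rm (T ^^ n) (pw (Suc n)) r) sums g r"
proof -
  define a where "a n = rm ((T ^^ n) r) (pw n)" for n
  define b where "b n = rm ((T ^^ n) r) (pw (Suc n))" for n
  have rs: "rsmult lm rm (T ^^ n) (pw (Suc n)) r = b n" for n by (simp add: b_def rs_ReM[OF paraTn r])
  have na: "norm (a n) \<le> q ^ n * norm r" for n using norm_pw_Tn[of n r] by (simp add: a_def nrm)
  have sa: "summable a" by (rule summable_comparison_test'[OF geo_summable[of "norm r"]]) (rule na)
  have nb: "norm (b n) \<le> q ^ n * (norm r / norm s)" for n
  proof -
    have "norm (b n) = norm (pw (Suc n)) * norm ((T ^^ n) r)" by (simp add: b_def nrm)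
    also have "\<dots> = (1 / norm s) * (norm (pw n) * norm ((T ^^ n) r))" by (simp add: omult_norm norm_oinv)
    also have "\<dots> \<le> (1 / norm s) * (q ^ n * norm r)" by (rule mult_left_mono[OF norm_pw_Tn]) (simp add: s_pos)
    finally show ?thesis by simp
  qed
  have sb: "summable b" by (rule summable_comparison_test'[OF geo_summable]) (rule nb)
  have rb: "rm (b n) s = a n" for n
    by (simp only: b_def a_def rr_span[of s, OF insp_opow_oinv insp_s] opow_oinv_right[OF s_nz])
  have tb: "T (b n) = a (Suc n)" for n
  proof -
    have "T (b n) = T ((T ^^ n) (rm r (pw (Suc n))))" by (simp add: b_def Tn_rm[OF r])
    also have "\<dots> = (T ^^ Suc n) (rm r (pw (Suc n)))" by simp
    also have "\<dots> = a (Suc n)" by (simp only: Tn_rm[OF r] a_def)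
    finally show ?thesis .
  qed
  have "S (suminf b) = (\<Sum>n. rm (b n) s) - (\<Sum>n. T (b n))"
    unfolding S_def by (simp add: bounded_linear.suminf[OF bl_rm sb] bounded_linear.suminf[OF blT sb])
  also have "\<dots> = suminf a - (\<Sum>n. a (Suc n))" by (simp add: rb tb)
  also have "\<dots> = a 0" by (subst suminf_split_head[OF sa]) simp
  also have "\<dots> = r" by (simp add: a_def rm_one)
  finally have "S (suminf b) = r" .
  then have "suminf b = g r" using gS by metis
  then show ?thesis using summable_sums[OF sb] rs by simp
qed

lemma right_claim: "(\<lambda>n. rsmult lm rm (T ^^ n) (pw (Suc n)) x) sums right_reg_inv lm rm S x"
proof -
  have e: "rsmult lm rm (T ^^ n) (pw (Suc n)) x = (\<Sum>i<8. rm (rsmult lm rm (T ^^ n) (pw (Suc n)) (comp x i)) (obasis i))" for n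
    by (rule PL2[OF rs_para[OF paraTn]])
  have "(\<lambda>n. \<Sum>i<8. rm (rsmult lm rm (T ^^ n) (pw (Suc n)) (comp x i)) (obasis i)) sums (\<Sum>i<8. rm (g (comp x i)) (obasis i))"
    by (rule sums_sum, rule bounded_linear.sums[OF bl_rm], rule right_ReM[OF comp_ReM])
  moreover have "right_reg_inv lm rm S x = (\<Sum>i<8. rm (g (comp x i)) (obasis i))"
    by (simp add: right_reg_inv_def oext_def odecomp_eq invS)
  ultimately show ?thesis using e by simp
qed

lemma left_w: "(\<lambda>n. P (lsmult lm rm (pw (Suc n)) (T ^^ n) w)) sums P (g w)"
proof -
  define z where "z = g w"
  have w: "w = S z" by (simp add: z_def Sg)
  define c where "c n = P (lm (pw n) ((T ^^ n) z))" for n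
  obtain KP where KP: "\<And>x. norm (P x) \<le> norm x * KP" and KP0: "0 < KP"
    using bounded_linear.pos_bounded[OF bl_P] by blast
  have c0: "c \<longlonglongrightarrow> 0"
  proof (rule Lim_null_comparison)
    show "\<forall>\<^sub>F n in sequentially. norm (c n) \<le> KP * norm z * q ^ n"
    proof (rule always_eventually, rule allI)
      fix n
      have "norm (c n) \<le> norm (lm (pw n) ((T ^^ n) z)) * KP" unfolding c_def by (rule KP)
      also have "\<dots> \<le> (q ^ n * norm z) * KP"
        using norm_pw_Tn[of n z] KP0 by (simp add: nlm mult_right_mono)
      finally show "norm (c n) \<le> KP * norm z * q ^ n" by (simp add: algebra_simps)
    qed
    show "(\<lambda>n. KP * norm z * q ^ n) \<longlonglongrightarrow> 0"
      by (rule tendsto_mult_right_zero, rule LIMSEQ_power_zero) (use q_ge0 q_lt1 in simp)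
  qed
  have step: "P (lsmult lm rm (pw (Suc n)) (T ^^ n) w) = c n - c (Suc n)" for n
  proof -
    let ?p = "pw (Suc n)"
    have e0: "P (lsmult lm rm ?p (T ^^ n) w) = P (lm ?p ((T ^^ n) w))"
      using PLa[OF paraTn, of n w ?p] by (simp add: lsmult_def Bp_def P_add P_diff)
    have e1: "(T ^^ n) w = (T ^^ n) (rm z s) - (T ^^ Suc n) z"
      unfolding w S_def using real_vector.linear_diff[OF bounded_linear.linear[OF blTn[of n]]]
        funpow_swap1[of T n z] by simp
    have e2: "P (lm ?p ((T ^^ n) (rm z s))) = c n"
    proof -
      have "P (lm ?p ((T ^^ n) (rm z s))) = P (rm ((T ^^ n) (rm z s)) ?p)" by (rule P_comm)
      also have "\<dots> = P ((T ^^ n) (rm (rm z s) ?p))" by (rule PLa[OF paraTn])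
      also have "\<dots> = P ((T ^^ n) (rm z (omult s ?p)))" by (simp only: rr_span[of s, OF insp_s insp_opow_oinv])
      also have "\<dots> = P (rm ((T ^^ n) z) (omult s ?p))" by (rule PLa[OF paraTn, symmetric])
      also have "\<dots> = P (lm (omult s ?p) ((T ^^ n) z))" by (rule P_comm[symmetric])
      also have "\<dots> = c n" by (simp only: c_def opow_oinv_left[OF s_nz])
      finally show ?thesis .
    qed
    show ?thesis using e0 e1 e2 by (simp add: lin P_diff c_def)
  qed
  have "(\<lambda>n. c n - c (Suc n)) sums (c 0 - 0)" by (rule telescope_sums'[OF c0])
  moreover have "c 0 = P z" by (simp add: c_def lm_one)
  ultimately show ?thesis using step by (simp add: z_def)
qed

lemma left_claim: "(\<lambda>n. lsmult lm rm (pw (Suc n)) (T ^^ n) x) sums left_reg_inv lm rm S x"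
proof -
  have e: "lsmult lm rm (pw (Suc n)) (T ^^ n) x = (\<Sum>i<8. rm (P (lsmult lm rm (pw (Suc n)) (T ^^ n) (rm x (ocnj (obasis i))))) (obasis i))" for n
    by (rule PL3[OF ls_para[OF paraTn]])
  have "(\<lambda>n. \<Sum>i<8. rm (P (lsmult lm rm (pw (Suc n)) (T ^^ n) (rm x (ocnj (obasis i))))) (obasis i)) sums (\<Sum>i<8. rm (P (g (rm x (ocnj (obasis i))))) (obasis i))"
    by (rule sums_sum, rule bounded_linear.sums[OF bl_rm], rule left_w)
  moreover have "left_reg_inv lm rm S x = (\<Sum>i<8. rm (P (g (rm x (ocnj (obasis i))))) (obasis i))"
    by (simp add: left_reg_inv_def olif_def ReV_eq invS)
  ultimately show ?thesis using e by simp
qed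

lemma blR: "bounded_linear (right_reg_inv lm rm S)"
proof -
  have "right_reg_inv lm rm S = (\<lambda>x. \<Sum>i<8. rm (g (P (lm (ocnj (obasis i)) x))) (obasis i))"
    by (simp add: fun_eq_iff right_reg_inv_def oext_def odecomp_eq invS comp_def)
  moreover have "bounded_linear (\<lambda>x. \<Sum>i<8. rm (g (P (lm (ocnj (obasis i)) x))) (obasis i))"
    by (intro bounded_linear_sum bounded_linear_compose[OF bl_rm] bounded_linear_compose[OF blg]
        bounded_linear_compose[OF bl_P] bl_lm)
  ultimately show ?thesis by simp
qed

lemma blL: "bounded_linear (left_reg_inv lm rm S)"
proof -
  have "left_reg_inv lm rm S = (\<lambda>x. \<Sum>i<8. rm (P (g (rm x (ocnj (obasis i))))) (obasis i))"
    by (simp add: fun_eq_iff left_reg_inv_def olif_def ReV_eq invS)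
  moreover have "bounded_linear (\<lambda>x. \<Sum>i<8. rm (P (g (rm x (ocnj (obasis i))))) (obasis i))"
    by (intro bounded_linear_sum bounded_linear_compose[OF bl_rm] bounded_linear_compose[OF bl_P]
        bounded_linear_compose[OF blg] bl_rm)
  ultimately show ?thesis by simp
qed

lemma main: "invertible_op S
    \<and> right_reg_inv lm rm S \<in> BRO lm rm
    \<and> left_reg_inv lm rm S \<in> BRO lm rm
    \<and> (\<forall>n. rsmult lm rm (T ^^ n) (pw (Suc n)) \<in> BRO lm rm
         \<and> lsmult lm rm (pw (Suc n)) (T ^^ n) \<in> BRO lm rm)
    \<and> (\<forall>x. (\<lambda>n. rsmult lm rm (T ^^ n) (pw (Suc n)) x) sums (right_reg_inv lm rm S x))
    \<and> (\<forall>x. (\<lambda>n. lsmult lm rm (pw (Suc n)) (T ^^ n) x) sums (left_reg_inv lm rm S x))"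
  using S_inv rs_BRO[OF TnBRO] ls_BRO[OF TnBRO] right_claim left_claim
    limit_para[OF blR rs_para[OF paraTn] right_claim] limit_para[OF blL ls_para[OF paraTn] left_claim]
  by blast

end


theorem mainTheorem3:
  fixes lm :: "oct \<Rightarrow> 'v::banach \<Rightarrow> 'v" and rm :: "'v \<Rightarrow> oct \<Rightarrow> 'v"
    and T :: "'v \<Rightarrow> 'v" and s :: oct
  assumes "Banach_O_bimodule lm rm"
    and "power_associative lm rm T"
    and "norm s > onorm T"
  shows "invertible_op (\<lambda>v. rm v s - T v)
    \<and> right_reg_inv lm rm (\<lambda>v. rm v s - T v) \<in> BRO lm rm
    \<and> left_reg_inv lm rm (\<lambda>v. rm v s - T v) \<in> BRO lm rm
    \<and> (\<forall>n. rsmult lm rm (T ^^ n) (opow (oinv s) (Suc n)) \<in> BRO lm rm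
         \<and> lsmult lm rm (opow (oinv s) (Suc n)) (T ^^ n) \<in> BRO lm rm)
    \<and> (\<forall>x. (\<lambda>n. rsmult lm rm (T ^^ n) (opow (oinv s) (Suc n)) x)
             sums (right_reg_inv lm rm (\<lambda>v. rm v s - T v) x))
    \<and> (\<forall>x. (\<lambda>n. lsmult lm rm (opow (oinv s) (Suc n)) (T ^^ n) x)
             sums (left_reg_inv lm rm (\<lambda>v. rm v s - T v) x))"
proof -
  interpret opthm lm rm T s
    using assms by unfold_locales (auto simp: Banach_O_bimodule_def)
  have e: "S = (\<lambda>v. rm v s - T v)" by (simp add: fun_eq_iff S_def)
  show ?thesis using main unfolding e .
qed

end
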